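(* Let $K$ be a discrete valuation field of characteristic $p>0$, and let $n\ge1$, $m\ge1$. (1) The sequence $$0\to\bigoplus_{j\ge0}\mathrm{fil}_{[m/p]}W_n(K)\xrightarrow{h}\bigoplus_{j\ge0}\mathrm{fil}_mW_n(K)\to\mathrm{fil}^F_mW_n(K)\to0$$ is exact, where the third arrow is $(x_j)_j\mapsto\sum_jF^j(x_j)$ and $h$ sends $(x_j)_j$ to $(y_j)_j$ with $y_0=F(x_0)$ and $y_j=F(x_j)-x_{j-1}$ for $j\ge1$. (2) The map $(x_i)_i\mapsto\sum_iF^i(x_i)$ induces an isomorphism $$\bigoplus_{i\ge0}\mathrm{fil}_mW_n(K)/\big(\mathrm{fil}_{[m/p]}W_n(K)+F(\mathrm{fil}_{[m/p]}W_n(K))\big)\xrightarrow{\ \simeq\ }\mathrm{fil}^F_mW_n(K)/\mathrm{fil}^F_{[m/p]}W_n(K).$$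
   Context: $v_K$ is the normalized valuation of $K$; $[x]$ is the integer part of $x$. $\mathrm{fil}_mW_n(K)=\{(f_{n-1},\dots,f_0)\in W_n(K)\mid p^jv_K(f_j)\ge -m\ (0\le j\le n-1)\}$, $F:W_n(K)\to W_n(K)$ is $(a_{n-1},\dots,a_0)\mapsto(a_{n-1}^p,\dots,a_0^p)$, and $\mathrm{fil}^F_mW_n(K)=\sum_{j\ge0}F^j(\mathrm{fil}_mW_n(K))$. Direct sums are over all $j\ge0$ (finitely supported families). *)

theory Defs
  imports "HOL-Library.Poly_Mapping" "HOL-Computational_Algebra.Primes" "HOL-Algebra.Algebra"
begin

type_synonym mpoly = "(nat \<Rightarrow>\<^sub>0 nat) \<Rightarrow>\<^sub>0 int"

definition mvar :: "nat \<Rightarrow> mpoly" where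
  "mvar i = Poly_Mapping.single (Poly_Mapping.single i 1) 1"

definition mpoly_eval :: "(nat \<Rightarrow> 'a::comm_ring_1) \<Rightarrow> mpoly \<Rightarrow> 'a" where
  "mpoly_eval x P = (\<Sum>mn\<in>Poly_Mapping.keys P. of_int (Poly_Mapping.lookup P mn) * (\<Prod>i\<in>Poly_Mapping.keys (mn::nat \<Rightarrow>\<^sub>0 nat). x i ^ Poly_Mapping.lookup mn i))"

definition mpoly_cdiv :: "nat \<Rightarrow> mpoly \<Rightarrow> mpoly" where
  "mpoly_cdiv d P = Poly_Mapping.map (\<lambda>c. c div int d) P"

definition wX :: "nat \<Rightarrow> mpoly" where "wX i = mvar (2*i)"
definition wY :: "nat \<Rightarrow> mpoly" where "wY i = mvar (2*i+1)"

definition ghost_poly :: "nat \<Rightarrow> (nat \<Rightarrow> mpoly) \<Rightarrow> nat \<Rightarrow> mpoly" where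
  "ghost_poly p Z k = (\<Sum>i\<le>k. of_nat (p^i) * (Z i) ^ (p^(k-i)))"

fun witt_add_polys :: "nat \<Rightarrow> nat \<Rightarrow> mpoly list" where
  "witt_add_polys p 0 = []"
| "witt_add_polys p (Suc k) =
     (let L = witt_add_polys p k in
      L @ [mpoly_cdiv (p^k) (ghost_poly p wX k + ghost_poly p wY k
               - (\<Sum>i<k. of_nat (p^i) * (L ! i) ^ (p^(k-i))))])"

definition witt_add_poly :: "nat \<Rightarrow> nat \<Rightarrow> mpoly" where
  "witt_add_poly p k = witt_add_polys p (Suc k) ! k"

text \<open>Witt vectors of length n over K: functions a with a i = 0 for i >= n;
  a = (a_0, ..., a_(n-1)) in the standard indexing.\<close>
definition witt_add :: "nat \<Rightarrow> nat \<Rightarrow> (nat \<Rightarrow> 'a::comm_ring_1) \<Rightarrow> (nat \<Rightarrow> 'a) \<Rightarrow> (nat \<Rightarrow> 'a)" where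
  "witt_add p n a b = (\<lambda>k. if k < n then
      mpoly_eval (\<lambda>v. if even v then a (v div 2) else b (v div 2)) (witt_add_poly p k) else 0)"

definition WittGroup :: "nat \<Rightarrow> nat \<Rightarrow> (nat \<Rightarrow> 'a::comm_ring_1) monoid" where
  "WittGroup p n = \<lparr>carrier = {a. \<forall>i\<ge>n. a i = 0}, monoid.mult = witt_add p n, monoid.one = (\<lambda>_. 0)\<rparr>"

definition witt_frob :: "nat \<Rightarrow> (nat \<Rightarrow> 'a::comm_ring_1) \<Rightarrow> (nat \<Rightarrow> 'a)" where
  "witt_frob p a = (\<lambda>i. a i ^ p)"

text \<open>v is a normalized discrete valuation on K, given on nonzero elements
  (v 0 = infinity is encoded by treating 0 separately).\<close>
definition normalized_dvf :: "('a::field \<Rightarrow> int) \<Rightarrow> bool" where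
  "normalized_dvf v \<longleftrightarrow>
     (\<forall>x y. x \<noteq> 0 \<longrightarrow> y \<noteq> 0 \<longrightarrow> v (x * y) = v x + v y) \<and>
     (\<forall>x y. x \<noteq> 0 \<longrightarrow> y \<noteq> 0 \<longrightarrow> x + y \<noteq> 0 \<longrightarrow> v (x + y) \<ge> min (v x) (v y)) \<and>
     (\<exists>\<pi>. \<pi> \<noteq> 0 \<and> v \<pi> = 1)"

text \<open>In the paper's indexing (f_(n-1),...,f_0) the condition is p^j v(f_j) >= -m;
  with f_j = a_(n-1-j) this reads p^(n-1-i) v(a_i) >= -m (with v(0) = infinity).\<close>
definition fil :: "nat \<Rightarrow> ('a::field \<Rightarrow> int) \<Rightarrow> nat \<Rightarrow> int \<Rightarrow> (nat \<Rightarrow> 'a) set" where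
  "fil p v n m = {a \<in> carrier (WittGroup p n).
      \<forall>i<n. a i \<noteq> 0 \<longrightarrow> int p ^ (n - 1 - i) * v (a i) \<ge> - m}"

text \<open>fil^F_m = sum over j of the subgroups F^j(fil_m), i.e. the subgroup generated by their union.\<close>
definition filF :: "nat \<Rightarrow> ('a::field \<Rightarrow> int) \<Rightarrow> nat \<Rightarrow> int \<Rightarrow> (nat \<Rightarrow> 'a) set" where
  "filF p v n m = generate (WittGroup p n) (\<Union>j. (witt_frob p ^^ j) ` fil p v n m)"

definition witt_dsum :: "nat \<Rightarrow> nat \<Rightarrow> (nat \<Rightarrow> 'a::comm_ring_1) set \<Rightarrow> (nat \<Rightarrow> nat \<Rightarrow> 'a) monoid" where
  "witt_dsum p n A = sum_group UNIV (\<lambda>j. (WittGroup p n)\<lparr>carrier := A\<rparr>)"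

definition frob_sum :: "nat \<Rightarrow> nat \<Rightarrow> (nat \<Rightarrow> nat \<Rightarrow> 'a::comm_ring_1) \<Rightarrow> (nat \<Rightarrow> 'a)" where
  "frob_sum p n x = finprod (WittGroup p n) (\<lambda>j. (witt_frob p ^^ j) (x j)) {j. x j \<noteq> (\<lambda>_. 0)}"

definition witt_h :: "nat \<Rightarrow> nat \<Rightarrow> (nat \<Rightarrow> nat \<Rightarrow> 'a::comm_ring_1) \<Rightarrow> (nat \<Rightarrow> nat \<Rightarrow> 'a)" where
  "witt_h p n x = (\<lambda>j. if j = 0 then witt_frob p (x 0)
      else witt_frob p (x j) \<otimes>\<^bsub>WittGroup p n\<^esub> inv\<^bsub>WittGroup p n\<^esub> (x (j - 1)))"

end

theory Submission
  imports Defs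
begin

definition mono :: "(nat \<Rightarrow> 'a::comm_ring_1) \<Rightarrow> (nat \<Rightarrow>\<^sub>0 nat) \<Rightarrow> 'a" where
  "mono x mn = (\<Prod>i\<in>Poly_Mapping.keys mn. x i ^ Poly_Mapping.lookup mn i)"

lemma mono_superset:
  assumes "finite T" "Poly_Mapping.keys mn \<subseteq> T"
  shows "mono x mn = (\<Prod>i\<in>T. x i ^ Poly_Mapping.lookup mn i)"
  unfolding mono_def
  by (rule prod.mono_neutral_left) (use assms in \<open>auto simp: in_keys_iff\<close>)

lemma mono_add: "mono x (a + b) = mono x a * mono x b"
proof -
  let ?T = "Poly_Mapping.keys a \<union> Poly_Mapping.keys b"
  have "mono x (a+b) = (\<Prod>i\<in>?T. x i ^ Poly_Mapping.lookup (a+b) i)"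
    by (rule mono_superset) (auto dest: keys_add[THEN subsetD])
  also have "\<dots> = (\<Prod>i\<in>?T. x i ^ Poly_Mapping.lookup a i) * (\<Prod>i\<in>?T. x i ^ Poly_Mapping.lookup b i)"
    by (simp add: lookup_add power_add prod.distrib)
  also have "\<dots> = mono x a * mono x b"
    by (simp add: mono_superset[of ?T a x] mono_superset[of ?T b x])
  finally show ?thesis .
qed

lemma mono_zero[simp]: "mono x 0 = 1"
  by (simp add: mono_def)

lemma mono_single: "mono x (Poly_Mapping.single i k) = x i ^ k"
  by (simp add: mono_def)

lemma eval_superset:
  assumes "finite S" "Poly_Mapping.keys P \<subseteq> S"
  shows "mpoly_eval x P = (\<Sum>mn\<in>S. of_int (Poly_Mapping.lookup P mn) * mono x mn)"
  unfolding mpoly_eval_def mono_def[symmetric]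
  by (rule sum.mono_neutral_left) (use assms in \<open>auto simp: in_keys_iff\<close>)

lemma eval_add: "mpoly_eval x (P + Q) = mpoly_eval x P + mpoly_eval x Q"
proof -
  let ?S = "Poly_Mapping.keys P \<union> Poly_Mapping.keys Q"
  have "mpoly_eval x (P+Q) = (\<Sum>mn\<in>?S. of_int (Poly_Mapping.lookup (P+Q) mn) * mono x mn)"
    by (rule eval_superset) (auto dest: keys_add[THEN subsetD])
  also have "\<dots> = (\<Sum>mn\<in>?S. of_int (Poly_Mapping.lookup P mn) * mono x mn) + (\<Sum>mn\<in>?S. of_int (Poly_Mapping.lookup Q mn) * mono x mn)"
    by (simp add: lookup_add distrib_right sum.distrib)
  also have "\<dots> = mpoly_eval x P + mpoly_eval x Q"
    by (simp add: eval_superset[of ?S P x] eval_superset[of ?S Q x])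
  finally show ?thesis .
qed

lemma eval_zero[simp]: "mpoly_eval x 0 = 0"
  by (simp add: mpoly_eval_def)

lemma eval_uminus: "mpoly_eval x (- P) = - mpoly_eval x P"
  using eval_add[of x P "-P"] by (simp add: add_eq_0_iff2)

lemma eval_diff: "mpoly_eval x (P - Q) = mpoly_eval x P - mpoly_eval x Q"
  using eval_add[of x P "-Q"] by (simp add: eval_uminus)

lemma eval_single: "mpoly_eval x (Poly_Mapping.single mn c) = of_int c * mono x mn"
  by (simp add: mpoly_eval_def mono_def)

lemma eval_mult: "mpoly_eval x (P * Q) = mpoly_eval x P * mpoly_eval x Q"
proof -
  have single_case: "mpoly_eval x (frag_of a * Q) = mpoly_eval x (frag_of a) * mpoly_eval x Q" for a Q
  proof -
    have "Poly_Mapping.keys Q \<subseteq> UNIV" by simp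
    then show ?thesis
    proof (induction Q rule: frag_induction)
      case zero then show ?case by simp
    next
      case (one b) then show ?case by (simp add: mult_single eval_single mono_add)
    next
      case (diff c d) then show ?case by (simp add: right_diff_distrib eval_diff)
    qed
  qed
  have "Poly_Mapping.keys P \<subseteq> UNIV" by simp
  then show ?thesis
  proof (induction P rule: frag_induction)
    case zero then show ?case by simp
  next
    case (one a) show ?case by (rule single_case)
  next
    case (diff c d) then show ?case by (simp add: left_diff_distrib eval_diff)
  qed
qed

lemma eval_one[simp]: "mpoly_eval x 1 = 1"
  using eval_single[of x 0 1] by simp

lemma eval_of_int[simp]: "mpoly_eval x (of_int c) = of_int c"
proof -
  have "Poly_Mapping.single 0 (of_int c :: int) = (of_int c :: mpoly)" by (rule single_of_int)
  then have "of_int c = (Poly_Mapping.single 0 c :: mpoly)" by simp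
  then show ?thesis using eval_single[of x 0 c] by simp
qed

lemma eval_of_nat[simp]: "mpoly_eval x (of_nat c) = of_nat c"
  using eval_of_int[of x "int c"] by simp

lemma eval_power: "mpoly_eval x (P ^ k) = mpoly_eval x P ^ k"
  by (induction k) (simp_all add: eval_mult)

lemma eval_sum: "mpoly_eval x (sum f S) = (\<Sum>i\<in>S. mpoly_eval x (f i))"
  by (induction S rule: infinite_finite_induct) (simp_all add: eval_add)

lemma eval_prod: "mpoly_eval x (prod f S) = (\<Prod>i\<in>S. mpoly_eval x (f i))"
  by (induction S rule: infinite_finite_induct) (simp_all add: eval_mult)

lemma eval_mvar[simp]: "mpoly_eval x (mvar i) = x i"
  by (simp add: mvar_def eval_single mono_single)

lemmas eval_simps = eval_add eval_diff eval_uminus eval_mult eval_power eval_sum eval_prod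

lemma hom_eval:
  fixes h :: "'a::comm_ring_1 \<Rightarrow> 'b::comm_ring_1"
  assumes add: "\<And>a b. h (a + b) = h a + h b" and mul: "\<And>a b. h (a * b) = h a * h b"
    and one: "h 1 = 1"
  shows "h (mpoly_eval x P) = mpoly_eval (\<lambda>i. h (x i)) P"
proof -
  have z: "h 0 = 0" using add[of 0 0] by simp
  have neg: "h (- a) = - h a" for a using add[of a "-a"] z by (simp add: add_eq_0_iff2)
  have hs: "h (sum f S) = (\<Sum>i\<in>S. h (f i))" for f and S :: "'c set"
    by (induction S rule: infinite_finite_induct) (simp_all add: z add)
  have hp: "h (prod f S) = (\<Prod>i\<in>S. h (f i))" for f and S :: "'c set"
    by (induction S rule: infinite_finite_induct) (simp_all add: one mul)
  have hpow: "h (a ^ k) = h a ^ k" for a k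
    by (induction k) (simp_all add: one mul)
  have hn: "h (of_nat k) = of_nat k" for k
    by (induction k) (simp_all add: z one add)
  have hd: "h (a - b) = h a - h b" for a b
    using add[of a "-b"] neg[of b] by simp
  have hi: "h (of_int c) = of_int c" for c
    by (cases c) (simp_all add: hn neg hd one)
  show ?thesis
    unfolding mpoly_eval_def by (simp add: hs hp mul hpow hi)
qed

lemma eval_eval: "mpoly_eval x (mpoly_eval s P) = mpoly_eval (\<lambda>i. mpoly_eval x (s i)) P"
  by (rule hom_eval) (simp_all add: eval_add eval_mult)

lemma eval_cong: "(\<And>i. x i = y i) \<Longrightarrow> mpoly_eval x P = mpoly_eval y P"
  by (metis ext)


lemma cg_trans: "(q::'a::comm_ring_1) dvd (a - b) \<Longrightarrow> q dvd (b - c) \<Longrightarrow> q dvd (a - c)"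
  using dvd_add[of q "a-b" "b-c"] by simp

lemma cg_sym: "(q::'a::comm_ring_1) dvd (a - b) \<Longrightarrow> q dvd (b - a)"
proof -
  assume h: "q dvd (a - b)"
  have "b - a = -(a - b)" by simp
  with h show ?thesis by (simp only: dvd_minus_iff)
qed

lemma cg_add: "(q::'a::comm_ring_1) dvd (a - b) \<Longrightarrow> q dvd (c - d) \<Longrightarrow> q dvd ((a + c) - (b + d))"
  using dvd_add[of q "a-b" "c-d"] by (simp add: algebra_simps)

lemma cg_mult: "(q::'a::comm_ring_1) dvd (a - b) \<Longrightarrow> q dvd (c - d) \<Longrightarrow> q dvd (a * c - b * d)"
proof -
  assume h: "q dvd (a - b)" "q dvd (c - d)"
  have "a * c - b * d = a * (c - d) + (a - b) * d" by (simp add: algebra_simps)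
  then show ?thesis using h by (simp add: dvd_add)
qed

lemma cg_power: "(q::'a::comm_ring_1) dvd (a - b) \<Longrightarrow> q dvd (a ^ k - b ^ k)"
  by (induction k) (simp_all add: cg_mult)

lemma cg_sum: "(\<And>i. i \<in> S \<Longrightarrow> (q::'a::comm_ring_1) dvd (f i - g i)) \<Longrightarrow> q dvd (sum f S - sum g S)"
  by (induction S rule: infinite_finite_induct) (simp_all add: cg_add)

lemma binom_cong:
  fixes a b :: "'a::comm_ring_1"
  assumes "Factorial_Ring.prime p"
  shows "of_nat p dvd ((a + b) ^ p - (a ^ p + b ^ p))"
proof -
  have p0: "p > 1" using assms prime_gt_1_nat by blast
  have "(a + b) ^ p = (\<Sum>k\<le>p. of_nat (p choose k) * a ^ k * b ^ (p - k))"
    by (rule binomial_ring)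
  also have "\<dots> = (\<Sum>k\<in>{..p} - {0, p}. of_nat (p choose k) * a ^ k * b ^ (p - k))
       + (\<Sum>k\<in>{0, p}. of_nat (p choose k) * a ^ k * b ^ (p - k))"
    by (rule sum.subset_diff) auto
  also have "(\<Sum>k\<in>{0, p}. of_nat (p choose k) * a ^ k * b ^ (p - k)) = b ^ p + a ^ p"
    using p0 by simp
  finally have eq: "(a + b) ^ p - (a ^ p + b ^ p) = (\<Sum>k\<in>{..p} - {0, p}. of_nat (p choose k) * a ^ k * b ^ (p - k))"
    by (simp add: algebra_simps)
  have "of_nat p dvd (of_nat (p choose k) * a ^ k * b ^ (p - k) :: 'a)" if "k \<in> {..p} - {0, p}" for k
  proof -
    have "p dvd (p choose k)" using that assms by (intro dvd_choose_prime) auto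
    then have "(of_nat p :: 'a) dvd of_nat (p choose k)" by (auto elim!: dvdE)
    then show ?thesis by (simp add: mult.assoc)
  qed
  then show ?thesis unfolding eq by (rule dvd_sum)
qed

lemma sum_pow_cong:
  fixes f :: "'b \<Rightarrow> 'a::comm_ring_1"
  assumes "Factorial_Ring.prime p"
  shows "of_nat p dvd (sum f S ^ p - (\<Sum>i\<in>S. f i ^ p))"
proof (induction S rule: infinite_finite_induct)
  case (infinite A) then show ?case using prime_gt_1_nat[OF assms] by (simp add: power_0_left)
next
  case empty then show ?case using prime_gt_1_nat[OF assms] by (simp add: power_0_left)
next
  case (insert x F)
  have "of_nat p dvd ((f x + sum f F) ^ p - (f x ^ p + sum f F ^ p))"
    by (rule binom_cong[OF assms])
  moreover have "of_nat p dvd ((f x ^ p + sum f F ^ p) - (f x ^ p + (\<Sum>i\<in>F. f i ^ p)))"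
    using insert.IH by simp
  ultimately show ?case using insert.hyps by (simp add: cg_trans)
qed

lemma nat_pow_cong:
  assumes "Factorial_Ring.prime p"
  shows "(of_nat p :: 'a::comm_ring_1) dvd (of_nat k ^ p - of_nat k)"
proof (induction k)
  case 0 then show ?case using prime_gt_1_nat[OF assms] by (simp add: power_0_left)
next
  case (Suc k)
  have "(of_nat p :: 'a) dvd ((of_nat k + 1) ^ p - (of_nat k ^ p + 1 ^ p))"
    by (rule binom_cong[OF assms])
  moreover have "(of_nat p :: 'a) dvd ((of_nat k ^ p + 1 ^ p) - (of_nat k + 1))"
    using Suc.IH by simp
  ultimately show ?case by (simp add: cg_trans add.commute)
qed

lemma int_pow_cong:
  assumes "Factorial_Ring.prime p"
  shows "(of_nat p :: 'a::comm_ring_1) dvd (of_int c ^ p - of_int c)"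
proof (cases "c \<ge> 0")
  case True
  then obtain k where "c = int k" using nonneg_int_cases by blast
  then show ?thesis using nat_pow_cong[OF assms, of k] by simp
next
  case False
  then obtain k where c: "c = - int k" by (intro that[of "nat (-c)"]) simp
  have p1: "p > 0" using prime_gt_1_nat[OF assms] by auto
  have "(of_nat p :: 'a) dvd ((of_nat k + (- of_nat k)) ^ p - (of_nat k ^ p + (- of_nat k) ^ p))"
    by (rule binom_cong[OF assms])
  then have h0: "(of_nat p :: 'a) dvd (- (of_nat k ^ p) - (- of_nat k) ^ p)"
    using p1 by (simp add: power_0_left)
  have "- (of_nat k ^ p) - (- of_nat k) ^ p = - ((- of_nat k) ^ p - (- (of_nat k ^ p)) :: 'a)"
    by simp
  with h0 have h1: "(of_nat p :: 'a) dvd ((- of_nat k) ^ p - (- (of_nat k ^ p)))"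
    by (simp only: dvd_minus_iff)
  have h2: "(of_nat p :: 'a) dvd (- (of_nat k ^ p) - (- of_nat k))"
    using cg_sym[OF nat_pow_cong[OF assms, of k]] by simp
  show ?thesis using cg_trans[OF h1 h2] c by simp
qed

lemma mono_pow: "mono x mn ^ k = mono (\<lambda>i. x i ^ k) mn"
  by (simp add: mono_def prod_power_distrib power_mult[symmetric] mult.commute)

lemma frob_eval:
  assumes "Factorial_Ring.prime p"
  shows "(of_nat p :: 'a::comm_ring_1) dvd (mpoly_eval x f ^ p - mpoly_eval (\<lambda>i. x i ^ p) f)"
proof -
  let ?t = "\<lambda>mn. of_int (Poly_Mapping.lookup f mn) * mono x mn :: 'a"
  have "(of_nat p :: 'a) dvd (mpoly_eval x f ^ p - (\<Sum>mn\<in>Poly_Mapping.keys f. ?t mn ^ p))"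
    unfolding mpoly_eval_def mono_def[symmetric] by (rule sum_pow_cong[OF assms])
  moreover have "(of_nat p :: 'a) dvd ((\<Sum>mn\<in>Poly_Mapping.keys f. ?t mn ^ p) - mpoly_eval (\<lambda>i. x i ^ p) f)"
    unfolding mpoly_eval_def mono_def[symmetric]
  proof (rule cg_sum)
    fix mn
    show "(of_nat p :: 'a) dvd (?t mn ^ p - of_int (Poly_Mapping.lookup f mn) * mono (\<lambda>i. x i ^ p) mn)"
      unfolding power_mult_distrib mono_pow
      by (rule cg_mult[OF int_pow_cong[OF assms]]) simp
  qed
  ultimately show ?thesis by (rule cg_trans)
qed

lemma pow_lift:
  fixes a b :: "'a::comm_ring_1"
  assumes "Factorial_Ring.prime p" and "of_nat p ^ Suc j dvd (a - b)"
  shows "of_nat p ^ Suc (Suc j) dvd (a ^ p - b ^ p)"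
proof -
  have ab: "(of_nat p :: 'a) dvd (a - b)"
    using assms(2) by (meson dvd_power dvd_trans zero_less_Suc)
  have eq: "a ^ p - b ^ p = (a - b) * (\<Sum>i<p. b ^ (p - Suc i) * a ^ i)"
    by (rule power_diff_sumr2)
  have "(of_nat p :: 'a) dvd ((\<Sum>i<p. b ^ (p - Suc i) * a ^ i) - (\<Sum>i<p. b ^ (p - Suc i) * b ^ i))"
    by (rule cg_sum, rule cg_mult, simp, rule cg_power[OF ab])
  moreover have "(\<Sum>i<p. b ^ (p - Suc i) * b ^ i) = of_nat p * b ^ (p - 1)"
  proof -
    have "(\<Sum>i<p. b ^ (p - Suc i) * b ^ i) = (\<Sum>i<p. b ^ (p - 1))"
      by (rule sum.cong) (auto simp: power_add[symmetric])
    then show ?thesis by simp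
  qed
  ultimately have "(of_nat p :: 'a) dvd (\<Sum>i<p. b ^ (p - Suc i) * a ^ i)"
    using dvd_add[OF _ dvd_triv_left[of "of_nat p" "b^(p-1)"]] by fastforce
  from mult_dvd_mono[OF assms(2) this] show ?thesis unfolding eq by (simp add: mult.commute)
qed

lemma pow_lift_iter:
  fixes a b :: "'a::comm_ring_1"
  assumes "Factorial_Ring.prime p" and "of_nat p dvd (a - b)"
  shows "of_nat p ^ Suc j dvd (a ^ (p ^ j) - b ^ (p ^ j))"
proof (induction j)
  case 0 then show ?case using assms by simp
next
  case (Suc j)
  have "of_nat p ^ Suc (Suc j) dvd ((a ^ (p ^ j)) ^ p - (b ^ (p ^ j)) ^ p)"
    by (rule pow_lift[OF assms(1) Suc])
  then show ?case by (simp add: power_mult[symmetric] mult.commute)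
qed


lemma mvar_pow: "mvar a ^ b = Poly_Mapping.single (Poly_Mapping.single a b) 1"
proof (induction b)
  case 0 then show ?case by simp
next
  case (Suc b)
  have "mvar a ^ Suc b = Poly_Mapping.single (Poly_Mapping.single a b) 1 * Poly_Mapping.single (Poly_Mapping.single a 1) 1"
    by (simp only: power_Suc2 Suc) (simp add: mvar_def)
  also have "\<dots> = Poly_Mapping.single (Poly_Mapping.single a (Suc b)) 1"
    by (simp add: mult_single single_add[symmetric])
  finally show ?case .
qed

lemma mono_mvar: "mono mvar a = Poly_Mapping.single a (1::int)"
proof (induction a rule: update_induct)
  case const then show ?case by simp
next
  case (update f a b)
  have u: "Poly_Mapping.update a b f = f + Poly_Mapping.single a b"
    using update.hyps(1) by (intro poly_mapping_eqI) (auto simp: lookup_update lookup_add lookup_single in_keys_iff when_def)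
  show ?case unfolding u mono_add update.IH mono_single mvar_pow mult_single by simp
qed

lemma eval_mvar_id: "mpoly_eval mvar P = P"
proof -
  have "Poly_Mapping.keys P \<subseteq> UNIV" by simp
  then show ?thesis
  proof (induction P rule: frag_induction)
    case zero then show ?case by simp
  next
    case (one a) then show ?case by (simp add: eval_single mono_mvar)
  next
    case (diff a b) then show ?case by (simp add: eval_diff)
  qed
qed

lemma lookup_of_nat_mult: "Poly_Mapping.lookup (of_nat d * Q :: mpoly) mn = int d * Poly_Mapping.lookup Q mn"
proof -
  have "(of_nat d * Q :: mpoly) = Poly_Mapping.map ((*) (int d)) Q"
    by (simp add: mult_map_scale_conv_mult)
  then show ?thesis by (simp add: map.rep_eq when_def)
qed

lemma cdiv_exact: "d > 0 \<Longrightarrow> mpoly_cdiv d (of_nat d * Q) = Q"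
  by (intro poly_mapping_eqI) (simp add: mpoly_cdiv_def map.rep_eq lookup_of_nat_mult when_def)

lemma mpoly_torsion: "d > 0 \<Longrightarrow> (of_nat d * Q :: mpoly) = of_nat d * Q' \<Longrightarrow> Q = Q'"
  by simp

section \<open>The Witt polynomials\<close>

lemma length_wap: "length (witt_add_polys p k) = k"
  by (induction k) (simp_all add: Let_def)

lemma wap_nth: "i < k \<Longrightarrow> witt_add_polys p k ! i = witt_add_poly p i"
proof (induction k)
  case 0 then show ?case by simp
next
  case (Suc k)
  show ?case
  proof (cases "i < k")
    case True then show ?thesis using Suc by (simp add: Let_def nth_append length_wap)
  next
    case False then have "i = k" using Suc by simp
    then show ?thesis by (simp add: witt_add_poly_def)
  qed
qed

abbreviation "S p k \<equiv> witt_add_poly p k"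

lemma S_rec: "S p k = mpoly_cdiv (p^k) (ghost_poly p wX k + ghost_poly p wY k
               - (\<Sum>i<k. of_nat (p^i) * (S p i) ^ (p^(k-i))))"
proof -
  have "S p k = witt_add_polys p (Suc k) ! k" by (simp add: witt_add_poly_def)
  also have "\<dots> = mpoly_cdiv (p^k) (ghost_poly p wX k + ghost_poly p wY k
               - (\<Sum>i<k. of_nat (p^i) * (witt_add_polys p k ! i) ^ (p^(k-i))))"
    by (simp add: Let_def nth_append length_wap)
  also have "(\<Sum>i<k. of_nat (p^i) * (witt_add_polys p k ! i) ^ (p^(k-i))) = (\<Sum>i<k. of_nat (p^i) * (S p i) ^ (p^(k-i)) :: mpoly)"
    by (rule sum.cong) (simp_all add: wap_nth)
  finally show ?thesis .
qed

definition ghost :: "nat \<Rightarrow> (nat \<Rightarrow> 'a::comm_ring_1) \<Rightarrow> nat \<Rightarrow> 'a" where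
  "ghost p a k = (\<Sum>i\<le>k. of_nat (p^i) * a i ^ (p^(k-i)))"

lemma ghost_poly_eq: "ghost_poly p Z k = ghost p Z k"
  by (simp add: ghost_poly_def ghost_def)

lemma ghost_Suc: "ghost p a (Suc k) = (\<Sum>i\<le>k. of_nat (p^i) * (a i ^ p) ^ (p^(k-i))) + of_nat (p ^ Suc k) * a (Suc k)"
proof -
  have "ghost p a (Suc k) = (\<Sum>i\<le>k. of_nat (p^i) * a i ^ (p^(Suc k-i))) + of_nat (p ^ Suc k) * a (Suc k)"
    by (simp add: ghost_def)
  also have "(\<Sum>i\<le>k. of_nat (p^i) * a i ^ (p^(Suc k-i))) = (\<Sum>i\<le>k. of_nat (p^i) * (a i ^ p) ^ (p^(k-i)))"
    by (rule sum.cong) (auto simp: Suc_diff_le power_mult[symmetric] mult.commute)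
  finally show ?thesis .
qed

lemma ghost_lessThan: "ghost p a k = (\<Sum>i<k. of_nat (p^i) * a i ^ (p^(k-i))) + of_nat (p^k) * a k"
  by (simp add: ghost_def lessThan_Suc_atMost[symmetric])

lemma eval_ghost: "mpoly_eval x (ghost p Z k) = ghost p (\<lambda>i. mpoly_eval x (Z i)) k"
  by (simp add: ghost_def eval_simps)

definition frobsub :: "nat \<Rightarrow> mpoly \<Rightarrow> mpoly" where
  "frobsub p = mpoly_eval (\<lambda>v. mvar v ^ p)"

theorem S_ghost:
  assumes "Factorial_Ring.prime p"
  shows "ghost p (S p) k = ghost p wX k + ghost p wY k"
proof (induction k rule: less_induct)
  case (less k)
  define D where "D = ghost p wX k + ghost p wY k - (\<Sum>i<k. of_nat (p^i) * (S p i) ^ (p^(k-i)))"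
  have p0: "p > 0" using prime_gt_1_nat[OF assms] by simp
  have dv: "(of_nat (p^k) :: mpoly) dvd D"
  proof (cases k)
    case 0 then show ?thesis by simp
  next
    case (Suc j)
    have IH: "ghost p (S p) j = ghost p wX j + ghost p wY j" using less Suc by simp
    have fIH: "(\<Sum>i\<le>j. of_nat (p^i) * (frobsub p (S p i)) ^ (p^(j-i))) = (\<Sum>i\<le>j. of_nat (p^i) * (wX i ^ p) ^ (p^(j-i))) + (\<Sum>i\<le>j. of_nat (p^i) * (wY i ^ p) ^ (p^(j-i)))"
    proof -
      have "frobsub p (ghost p (S p) j) = frobsub p (ghost p wX j + ghost p wY j)" using IH by simp
      then show ?thesis
        by (simp add: frobsub_def ghost_def eval_simps wX_def wY_def)
    qed
    have "D = of_nat (p ^ Suc j) * (wX (Suc j) + wY (Suc j)) + (\<Sum>i\<le>j. of_nat (p^i) * ((frobsub p (S p i)) ^ (p^(j-i)) - (S p i) ^ (p^(Suc j - i))))"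
      unfolding D_def Suc ghost_Suc lessThan_Suc_atMost
      apply (simp add: algebra_simps sum_subtractf sum.distrib)
      using fIH by simp
    moreover have "(of_nat (p^k) :: mpoly) dvd of_nat (p ^ Suc j) * (wX (Suc j) + wY (Suc j))"
      using Suc by simp
    moreover have "(of_nat (p^k) :: mpoly) dvd (\<Sum>i\<le>j. of_nat (p^i) * ((frobsub p (S p i)) ^ (p^(j-i)) - (S p i) ^ (p^(Suc j - i))))"
    proof (rule dvd_sum)
      fix i assume i: "i \<in> {..j}"
      have c1: "(of_nat p :: mpoly) dvd (frobsub p (S p i) - (S p i) ^ p)"
        using cg_sym[OF frob_eval[OF assms, of mvar "S p i"]] by (simp add: eval_mvar_id frobsub_def)
      have c2: "(of_nat p :: mpoly) ^ Suc (j - i) dvd ((frobsub p (S p i)) ^ (p^(j-i)) - ((S p i) ^ p) ^ (p^(j-i)))"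
        by (rule pow_lift_iter[OF assms c1])
      have e: "((S p i) ^ p) ^ (p^(j-i)) = (S p i) ^ (p^(Suc j - i))"
        using i by (simp add: power_mult[symmetric] Suc_diff_le mult.commute)
      have "(of_nat p :: mpoly) ^ i * of_nat p ^ Suc (j - i) dvd of_nat (p^i) * ((frobsub p (S p i)) ^ (p^(j-i)) - (S p i) ^ (p^(Suc j - i)))"
      proof -
        from c2 e have c3: "(of_nat p :: mpoly) ^ Suc (j - i) dvd ((frobsub p (S p i)) ^ (p^(j-i)) - (S p i) ^ (p^(Suc j - i)))"
          by simp
        have "(of_nat p :: mpoly) ^ i * of_nat p ^ Suc (j - i) dvd of_nat p ^ i * ((frobsub p (S p i)) ^ (p^(j-i)) - (S p i) ^ (p^(Suc j - i)))"
          by (rule mult_dvd_mono[OF dvd_refl c3])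
        then show ?thesis by (simp only: of_nat_power)
      qed
      note h1 = this
      have h2: "(of_nat p :: mpoly) ^ i * of_nat p ^ Suc (j - i) = of_nat (p^k)"
        using i Suc by (simp add: power_add[symmetric])
      show "(of_nat (p^k) :: mpoly) dvd of_nat (p^i) * ((frobsub p (S p i)) ^ (p^(j-i)) - (S p i) ^ (p^(Suc j - i)))"
        using h1[unfolded h2] .
    qed
    ultimately show ?thesis by (simp add: dvd_add)
  qed
  then obtain Q where Q: "D = of_nat (p^k) * Q" by (elim dvdE)
  have "S p k = mpoly_cdiv (p^k) D"
    unfolding D_def by (subst S_rec) (simp add: ghost_poly_eq)
  also have "\<dots> = Q" unfolding Q using p0 by (intro cdiv_exact) simp
  finally have "S p k = Q" .
  then have "of_nat (p^k) * S p k = D" using Q by simp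
  then show ?case unfolding D_def by (simp add: ghost_lessThan algebra_simps)
qed


definition wadd :: "nat \<Rightarrow> (nat \<Rightarrow> 'a::comm_ring_1) \<Rightarrow> (nat \<Rightarrow> 'a) \<Rightarrow> nat \<Rightarrow> 'a" where
  "wadd p a b = (\<lambda>k. mpoly_eval (\<lambda>v. if even v then a (v div 2) else b (v div 2)) (S p k))"

lemma ghost_wadd:
  assumes "Factorial_Ring.prime p"
  shows "ghost p (wadd p a b) k = ghost p a k + ghost p b k"
proof -
  let ?s = "\<lambda>v. if even v then a (v div 2) else b (v div 2)"
  have "mpoly_eval ?s (ghost p (S p) k) = mpoly_eval ?s (ghost p wX k + ghost p wY k)"
    using S_ghost[OF assms] by simp
  then show ?thesis by (simp add: eval_ghost eval_add wadd_def wX_def wY_def)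
qed

lemma eval_wadd: "mpoly_eval x (wadd p A B k) = wadd p (\<lambda>i. mpoly_eval x (A i)) (\<lambda>i. mpoly_eval x (B i)) k"
  unfolding wadd_def eval_eval by (rule eval_cong) simp

lemma ghost_inj:
  assumes "p > 0" and "\<And>k. k < N \<Longrightarrow> ghost p u k = ghost p (v :: nat \<Rightarrow> mpoly) k"
  shows "k < N \<Longrightarrow> u k = v k"
proof (induction k rule: less_induct)
  case (less k)
  have "(\<Sum>i<k. of_nat (p^i) * u i ^ (p^(k-i))) = (\<Sum>i<k. of_nat (p^i) * v i ^ (p^(k-i)) :: mpoly)"
    using less by (intro sum.cong) auto
  then have "(of_nat (p^k) :: mpoly) * u k = of_nat (p^k) * v k"
    using assms(2)[OF less.prems] by (simp add: ghost_lessThan)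
  then show ?case using assms(1) by simp
qed

lemma ghost_cong: "(\<And>i. i \<le> k \<Longrightarrow> a i = b i) \<Longrightarrow> ghost p a k = ghost p b k"
  by (simp add: ghost_def)

lemma wadd_comm:
  assumes "Factorial_Ring.prime p"
  shows "wadd p a b = wadd p b a"
proof
  fix k
  have p0: "p > 0" using prime_gt_1_nat[OF assms] by simp
  define XX where "XX = (\<lambda>i. mvar (2*i))"
  define YY where "YY = (\<lambda>i. mvar (2*i+1))"
  have "wadd p XX YY k = wadd p YY XX k"
    by (rule ghost_inj[OF p0, of "Suc k"]) (simp_all add: ghost_wadd[OF assms] add.commute)
  then have "mpoly_eval (\<lambda>v. if even v then a (v div 2) else b (v div 2)) (wadd p XX YY k)
           = mpoly_eval (\<lambda>v. if even v then a (v div 2) else b (v div 2)) (wadd p YY XX k)" by simp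
  then show "wadd p a b k = wadd p b a k"
    by (simp add: eval_wadd XX_def YY_def)
qed

lemma wadd_assoc:
  assumes "Factorial_Ring.prime p"
  shows "wadd p (wadd p a b) c = wadd p a (wadd p b c)"
proof
  fix k
  have p0: "p > 0" using prime_gt_1_nat[OF assms] by simp
  define XX where "XX = (\<lambda>i. mvar (3*i))"
  define YY where "YY = (\<lambda>i. mvar (3*i+1))"
  define ZZ where "ZZ = (\<lambda>i. mvar (3*i+2))"
  have "wadd p (wadd p XX YY) ZZ k = wadd p XX (wadd p YY ZZ) k"
    by (rule ghost_inj[OF p0, of "Suc k"]) (simp_all add: ghost_wadd[OF assms] add.assoc)
  then have "mpoly_eval (\<lambda>v. if v mod 3 = 0 then a (v div 3) else if v mod 3 = 1 then b (v div 3) else c (v div 3)) (wadd p (wadd p XX YY) ZZ k)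
           = mpoly_eval (\<lambda>v. if v mod 3 = 0 then a (v div 3) else if v mod 3 = 1 then b (v div 3) else c (v div 3)) (wadd p XX (wadd p YY ZZ) k)" by simp
  moreover have d: "\<And>i. Suc (3*i) div 3 = i" "\<And>i. Suc (Suc (3*i)) div 3 = i" "\<And>i. Suc (Suc (3*i)) mod 3 = 2" "\<And>i. Suc (3*i) mod 3 = 1"
    by presburger+
  ultimately show "wadd p (wadd p a b) c k = wadd p a (wadd p b c) k"
    by (simp add: eval_wadd XX_def YY_def ZZ_def d)
qed

lemma ghost_zero: "p > 0 \<Longrightarrow> ghost p (\<lambda>_. 0) k = 0"
  by (simp add: ghost_def power_0_left)

lemma wadd_zero:
  assumes "Factorial_Ring.prime p"
  shows "wadd p a (\<lambda>_. 0) = a"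
proof
  fix k
  have p0: "p > 0" using prime_gt_1_nat[OF assms] by simp
  have "wadd p mvar (\<lambda>_. 0) k = mvar k"
    by (rule ghost_inj[OF p0, of "Suc k"]) (simp_all add: ghost_wadd[OF assms] ghost_zero[OF p0])
  then have "mpoly_eval a (wadd p mvar (\<lambda>_. 0) k) = mpoly_eval a (mvar k)" by simp
  then show "wadd p a (\<lambda>_. 0) k = a k"
    by (simp add: eval_wadd)
qed

definition trunc :: "nat \<Rightarrow> (nat \<Rightarrow> 'a::zero) \<Rightarrow> nat \<Rightarrow> 'a" where
  "trunc N a = (\<lambda>i. if i < N then a i else 0)"

lemma wadd_trunc:
  assumes "Factorial_Ring.prime p" and "k < N"
  shows "wadd p (trunc N a) (trunc N b) k = wadd p a b k"
proof -
  have p0: "p > 0" using prime_gt_1_nat[OF assms(1)] by simp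
  define XX where "XX = (\<lambda>i. mvar (2*i))"
  define YY where "YY = (\<lambda>i. mvar (2*i+1))"
  have g: "ghost p (trunc N U) j = ghost p U j" if "j < N" for U :: "nat \<Rightarrow> mpoly" and j
    using that by (intro ghost_cong) (simp add: trunc_def)
  have "wadd p (trunc N XX) (trunc N YY) k = wadd p XX YY k"
    by (rule ghost_inj[OF p0, of N]) (simp_all add: ghost_wadd[OF assms(1)] g assms(2))
  then have "mpoly_eval (\<lambda>v. if even v then a (v div 2) else b (v div 2)) (wadd p (trunc N XX) (trunc N YY) k)
           = mpoly_eval (\<lambda>v. if even v then a (v div 2) else b (v div 2)) (wadd p XX YY k)" by simp
  moreover have "(\<lambda>i. mpoly_eval (\<lambda>v. if even v then a (v div 2) else b (v div 2)) (trunc N XX i)) = trunc N a"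
    by (auto simp: trunc_def XX_def)
  moreover have "(\<lambda>i. mpoly_eval (\<lambda>v. if even v then a (v div 2) else b (v div 2)) (trunc N YY i)) = trunc N b"
    by (auto simp: trunc_def YY_def)
  ultimately show ?thesis by (simp add: eval_wadd XX_def YY_def)
qed

lemma wadd_top:
  assumes "Factorial_Ring.prime p"
  shows "wadd p a b k = a k + b k + wadd p (trunc k a) (trunc k b) k"
proof -
  have p0: "p > 0" using prime_gt_1_nat[OF assms(1)] by simp
  define XX where "XX = (\<lambda>i. mvar (2*i) :: mpoly)"
  define YY where "YY = (\<lambda>i. mvar (2*i+1) :: mpoly)"
  have low: "wadd p (trunc k XX) (trunc k YY) i = wadd p XX YY i" if "i < k" for i
    using wadd_trunc[OF assms that] .
  have gt: "ghost p (trunc k U) k = ghost p U k - of_nat (p^k) * U k" for U :: "nat \<Rightarrow> mpoly"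
  proof -
    have "(\<Sum>i<k. of_nat (p^i) * trunc k U i ^ (p^(k-i))) = (\<Sum>i<k. of_nat (p^i) * U i ^ (p^(k-i)) :: mpoly)"
      by (intro sum.cong) (auto simp: trunc_def)
    then show ?thesis by (simp add: ghost_lessThan trunc_def)
  qed
  define w where "w = wadd p XX YY k"
  define wT where "wT = wadd p (trunc k XX) (trunc k YY) k"
  define \<Sigma> where "\<Sigma> = (\<Sum>i<k. of_nat (p^i) * wadd p XX YY i ^ (p^(k-i)) :: mpoly)"
  have G1: "ghost p (wadd p (trunc k XX) (trunc k YY)) k = ghost p XX k + ghost p YY k - of_nat (p^k) * (XX k + YY k)"
    by (simp add: ghost_wadd[OF assms] gt algebra_simps)
  have G2: "ghost p (wadd p (trunc k XX) (trunc k YY)) k = \<Sigma> + of_nat (p^k) * wT"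
    unfolding ghost_lessThan \<Sigma>_def wT_def by (simp add: low)
  have e1: "ghost p XX k + ghost p YY k = \<Sigma> + of_nat (p^k) * w"
    unfolding ghost_wadd[OF assms, symmetric] \<Sigma>_def w_def by (rule ghost_lessThan)
  have e3: "\<Sigma> + of_nat (p^k) * w - of_nat (p^k) * (XX k + YY k) = \<Sigma> + of_nat (p^k) * wT"
    using G1 G2 e1 by simp
  then have "(of_nat (p^k) :: mpoly) * w = of_nat (p^k) * (XX k + YY k + wT)"
    by (simp add: algebra_simps)
  then have "w = XX k + YY k + wT" using p0 by simp
  then have U: "wadd p XX YY k = XX k + YY k + wadd p (trunc k XX) (trunc k YY) k"
    unfolding w_def wT_def .
  let ?s = "\<lambda>v. if even v then a (v div 2) else b (v div 2)"
  from U have "mpoly_eval ?s (wadd p XX YY k) = mpoly_eval ?s (XX k + YY k + wadd p (trunc k XX) (trunc k YY) k)" by simp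
  moreover have "(\<lambda>i. mpoly_eval ?s (trunc k XX i)) = trunc k a"
    by (auto simp: trunc_def XX_def)
  moreover have "(\<lambda>i. mpoly_eval ?s (trunc k YY i)) = trunc k b"
    by (auto simp: trunc_def YY_def)
  ultimately show ?thesis by (simp add: eval_wadd eval_add XX_def YY_def)
qed

lemma wadd_frob:
  assumes "Factorial_Ring.prime p" and "of_nat p = (0::'a::comm_ring_1)"
  shows "wadd p a b k ^ p = wadd p (\<lambda>i. a i ^ p) (\<lambda>i. (b i :: 'a) ^ p) k"
proof -
  let ?s = "\<lambda>v. if even v then a (v div 2) else b (v div 2)"
  have "(of_nat p :: 'a) dvd (mpoly_eval ?s (S p k) ^ p - mpoly_eval (\<lambda>v. ?s v ^ p) (S p k))"
    by (rule frob_eval[OF assms(1)])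
  then have "mpoly_eval ?s (S p k) ^ p = mpoly_eval (\<lambda>v. ?s v ^ p) (S p k)"
    using assms(2) by simp
  moreover have "(\<lambda>v. ?s v ^ p) = (\<lambda>v. if even v then a (v div 2) ^ p else b (v div 2) ^ p)"
    by auto
  ultimately show ?thesis by (simp add: wadd_def)
qed


lemma witt_add_trunc: "witt_add p n a b = trunc n (wadd p a b)"
  by (auto simp: witt_add_def trunc_def wadd_def)

lemma trunc_idem[simp]: "trunc n (trunc n x) = trunc n x"
  by (rule ext) (simp add: trunc_def)

lemma trunc_apply[simp]: "k < n \<Longrightarrow> trunc n f k = f k"
  by (simp add: trunc_def)

lemma trunc_apply2[simp]: "\<not> k < n \<Longrightarrow> trunc n f k = 0"
  by (simp add: trunc_def)

lemma trunc_carrier: "\<forall>i\<ge>n. a i = 0 \<Longrightarrow> trunc n a = a"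
  by (auto simp: trunc_def)

lemma wadd_trunc1:
  assumes "Factorial_Ring.prime p" and "k < n" and "\<forall>i\<ge>n. c i = 0"
  shows "wadd p (trunc n x) c k = wadd p x c k"
proof -
  have "wadd p (trunc n x) c k = wadd p (trunc n (trunc n x)) (trunc n c) k"
    using wadd_trunc[OF assms(1,2), of "trunc n x" c] by simp
  also have "\<dots> = wadd p (trunc n x) (trunc n c) k" by simp
  also have "\<dots> = wadd p x c k" by (rule wadd_trunc[OF assms(1,2)])
  finally show ?thesis .
qed

fun negl :: "nat \<Rightarrow> (nat \<Rightarrow> 'a::comm_ring_1) \<Rightarrow> nat \<Rightarrow> 'a list" where
  "negl p a 0 = []"
| "negl p a (Suc k) = (let L = negl p a k in L @ [- a k - wadd p (trunc k a) (\<lambda>i. if i < k then L ! i else 0) k])"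

definition wneg :: "nat \<Rightarrow> (nat \<Rightarrow> 'a::comm_ring_1) \<Rightarrow> nat \<Rightarrow> 'a" where
  "wneg p a i = negl p a (Suc i) ! i"

lemma length_negl: "length (negl p a k) = k"
  by (induction k) (simp_all add: Let_def)

lemma negl_nth: "i < k \<Longrightarrow> negl p a k ! i = wneg p a i"
proof (induction k)
  case 0 then show ?case by simp
next
  case (Suc k)
  show ?case
  proof (cases "i < k")
    case True then show ?thesis using Suc by (simp add: Let_def nth_append length_negl)
  next
    case False then have "i = k" using Suc by simp
    then show ?thesis by (simp add: wneg_def)
  qed
qed

lemma wneg_rec: "wneg p a k = - a k - wadd p (trunc k a) (trunc k (wneg p a)) k"
proof -
  have "(\<lambda>i. if i < k then negl p a k ! i else 0) = trunc k (wneg p a)"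
    by (auto simp: trunc_def negl_nth)
  then show ?thesis by (simp add: wneg_def Let_def nth_append length_negl)
qed

lemma wadd_wneg:
  assumes "Factorial_Ring.prime p"
  shows "wadd p a (wneg p a) = (\<lambda>_. 0)"
proof
  fix k
  show "wadd p a (wneg p a) k = 0"
    using wadd_top[OF assms, of a "wneg p a" k] wneg_rec[of p a k] by simp
qed

lemma WittGroup_simps:
  "carrier (WittGroup p n) = {a. \<forall>i\<ge>n. a i = 0}"
  "x \<otimes>\<^bsub>WittGroup p n\<^esub> y = witt_add p n x y"
  "\<one>\<^bsub>WittGroup p n\<^esub> = (\<lambda>_. 0)"
  by (simp_all add: WittGroup_def)

lemma witt_add_closed: "witt_add p n a b \<in> {a. \<forall>i\<ge>n. a i = 0}"
  by (simp add: witt_add_def)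

theorem Witt_comm_group:
  assumes "Factorial_Ring.prime p"
  shows "comm_group (WittGroup p n :: (nat \<Rightarrow> 'a::comm_ring_1) monoid)"
proof (rule comm_groupI, simp_all only: WittGroup_simps)
  fix x y z :: "nat \<Rightarrow> 'a"
  assume x: "x \<in> {a. \<forall>i\<ge>n. a i = 0}" and y: "y \<in> {a. \<forall>i\<ge>n. a i = 0}" and z: "z \<in> {a. \<forall>i\<ge>n. a i = 0}"
  show "witt_add p n (witt_add p n x y) z = witt_add p n x (witt_add p n y z)"
  proof
    fix k
    show "witt_add p n (witt_add p n x y) z k = witt_add p n x (witt_add p n y z) k"
    proof (cases "k < n")
      case True
      have "witt_add p n (witt_add p n x y) z k = wadd p (wadd p x y) z k"
        using True z by (simp add: witt_add_trunc wadd_trunc1[OF assms True])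
      moreover have "witt_add p n x (witt_add p n y z) k = wadd p x (wadd p y z) k"
      proof -
        have "wadd p x (trunc n (wadd p y z)) k = wadd p (trunc n (wadd p y z)) x k"
          by (simp add: wadd_comm[OF assms])
        also have "\<dots> = wadd p (wadd p y z) x k"
          using x by (simp add: wadd_trunc1[OF assms True])
        finally show ?thesis using True by (simp add: witt_add_trunc wadd_comm[OF assms])
      qed
      ultimately show ?thesis by (simp add: wadd_assoc[OF assms])
    next
      case False then show ?thesis by (simp add: witt_add_def)
    qed
  qed
next
  fix x y :: "nat \<Rightarrow> 'a"
  show "witt_add p n x y = witt_add p n y x"
    by (simp add: witt_add_trunc wadd_comm[OF assms])
next
  fix x :: "nat \<Rightarrow> 'a"
  assume x: "x \<in> {a. \<forall>i\<ge>n. a i = 0}"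
  show "witt_add p n (\<lambda>_. 0) x = x"
    using x by (simp add: witt_add_trunc wadd_comm[OF assms] wadd_zero[OF assms] trunc_carrier)
next
  fix x :: "nat \<Rightarrow> 'a"
  assume x: "x \<in> {a. \<forall>i\<ge>n. a i = 0}"
  show "\<exists>y\<in>{a. \<forall>i\<ge>n. a i = 0}. witt_add p n y x = (\<lambda>_. 0)"
  proof (intro bexI)
    show "trunc n (wneg p x) \<in> {a. \<forall>i\<ge>n. a i = 0}" by (simp add: trunc_def)
    show "witt_add p n (trunc n (wneg p x)) x = (\<lambda>_. 0)"
    proof
      fix k
      show "witt_add p n (trunc n (wneg p x)) x k = 0"
      proof (cases "k < n")
        case True
        then have "witt_add p n (trunc n (wneg p x)) x k = wadd p (wneg p x) x k"
          using x by (simp add: witt_add_trunc wadd_trunc1[OF assms True])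
        also have "\<dots> = 0" by (simp add: wadd_comm[OF assms] wadd_wneg[OF assms])
        finally show ?thesis .
      qed (simp add: witt_add_def)
    qed
  qed
qed (simp_all add: witt_add_def)


section \<open>Weights\<close>

definition wt :: "nat \<Rightarrow> (nat \<Rightarrow>\<^sub>0 nat) \<Rightarrow> nat" where
  "wt p mn = (\<Sum>v\<in>Poly_Mapping.keys mn. Poly_Mapping.lookup mn v * p ^ (v div 2))"

lemma wt_superset: "finite T \<Longrightarrow> Poly_Mapping.keys mn \<subseteq> T \<Longrightarrow> wt p mn = (\<Sum>v\<in>T. Poly_Mapping.lookup mn v * p ^ (v div 2))"
  unfolding wt_def by (rule sum.mono_neutral_left) (auto simp: in_keys_iff)

lemma wt_add: "wt p (a + b) = wt p a + wt p b"
proof -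
  let ?T = "Poly_Mapping.keys a \<union> Poly_Mapping.keys b"
  have "wt p (a+b) = (\<Sum>v\<in>?T. Poly_Mapping.lookup (a+b) v * p ^ (v div 2))"
    by (rule wt_superset) (auto dest: keys_add[THEN subsetD])
  also have "\<dots> = (\<Sum>v\<in>?T. Poly_Mapping.lookup a v * p ^ (v div 2)) + (\<Sum>v\<in>?T. Poly_Mapping.lookup b v * p ^ (v div 2))"
    by (simp add: lookup_add distrib_right sum.distrib)
  also have "\<dots> = wt p a + wt p b"
    by (simp add: wt_superset[of ?T a p] wt_superset[of ?T b p])
  finally show ?thesis .
qed

lemma wt_zero[simp]: "wt p 0 = 0" by (simp add: wt_def)

definition Wle :: "nat \<Rightarrow> nat \<Rightarrow> mpoly \<Rightarrow> bool" where
  "Wle p W P \<longleftrightarrow> (\<forall>mn\<in>Poly_Mapping.keys P. wt p mn \<le> W)"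

lemma Wle_add: "Wle p W P \<Longrightarrow> Wle p W Q \<Longrightarrow> Wle p W (P + Q)"
  unfolding Wle_def using keys_add[of P Q] by auto

lemma Wle_diff: "Wle p W P \<Longrightarrow> Wle p W Q \<Longrightarrow> Wle p W (P - Q)"
  unfolding Wle_def using keys_diff[of P Q] by auto

lemma Wle_mono: "Wle p W P \<Longrightarrow> W \<le> W' \<Longrightarrow> Wle p W' P"
  unfolding Wle_def by force

lemma Wle_mult: "Wle p W1 P \<Longrightarrow> Wle p W2 Q \<Longrightarrow> Wle p (W1 + W2) (P * Q)"
  unfolding Wle_def
proof
  fix mn assume H: "Ball (Poly_Mapping.keys P) (\<lambda>mn. wt p mn \<le> W1)" "Ball (Poly_Mapping.keys Q) (\<lambda>mn. wt p mn \<le> W2)"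
    "mn \<in> Poly_Mapping.keys (P * Q)"
  show "wt p mn \<le> W1 + W2"
  proof -
    obtain a b where "mn = a + b" "a \<in> Poly_Mapping.keys P" "b \<in> Poly_Mapping.keys Q"
      using subsetD[OF keys_mult[of P Q] \<open>mn \<in> Poly_Mapping.keys (P * Q)\<close>] by blast
    then show ?thesis using H by (auto simp: wt_add intro!: add_mono)
  qed
qed

lemma Wle_one: "Wle p 0 1"
  by (simp add: Wle_def)

lemma Wle_power: "Wle p W P \<Longrightarrow> Wle p (e * W) (P ^ e)"
proof (induction e)
  case 0 then show ?case by (simp add: Wle_one)
next
  case (Suc e)
  have "Wle p (W + e * W) (P * P ^ e)" by (rule Wle_mult[OF Suc.prems Suc.IH[OF Suc.prems]])
  then show ?case by simp
qed

lemma Wle_of_nat: "Wle p 0 (of_nat c)"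
  unfolding Wle_def by (auto simp: in_keys_iff lookup_of_nat when_def split: if_splits)

lemma Wle_cmult: "Wle p W Q \<Longrightarrow> Wle p W (of_nat c * Q)"
  using Wle_mult[OF Wle_of_nat] by fastforce

lemma Wle_sum: "(\<And>i. i \<in> I \<Longrightarrow> Wle p W (f i)) \<Longrightarrow> Wle p W (sum f I)"
  unfolding Wle_def using keys_sum[of f I] by auto

lemma Wle_cdiv: "Wle p W P \<Longrightarrow> Wle p W (mpoly_cdiv d P)"
  unfolding Wle_def mpoly_cdiv_def by (auto simp: in_keys_iff map.rep_eq when_def)

lemma Wle_mvar: "Wle p (p ^ (v div 2)) (mvar v)"
proof -
  have "wt p (Poly_Mapping.single v 1) = p ^ (v div 2)" by (simp add: wt_def)
  then show ?thesis by (simp add: Wle_def mvar_def)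
qed

lemma Wle_ghost: "(\<And>i. Wle p (p^i) (Z i)) \<Longrightarrow> Wle p (p^k) (ghost p Z k)"
  unfolding ghost_def
proof (rule Wle_sum)
  fix i assume Z: "\<And>i. Wle p (p^i) (Z i)" and i: "i \<in> {..k}"
  have "Wle p (p^(k-i) * p^i) (Z i ^ p^(k-i))" by (rule Wle_power[OF Z])
  moreover have "p^(k-i) * p^i = p^k" using i by (simp add: power_add[symmetric])
  ultimately show "Wle p (p^k) (of_nat (p^i) * Z i ^ p^(k-i))" by (intro Wle_cmult) simp
qed

lemma Wle_S: "Wle p (p^k) (S p k)"
proof (induction k rule: less_induct)
  case (less k)
  have gX: "Wle p (p^k) (ghost p wX k)"
    by (rule Wle_ghost) (use Wle_mvar[of p "2*_"] in \<open>simp add: wX_def\<close>)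
  have gY: "Wle p (p^k) (ghost p wY k)"
    by (rule Wle_ghost) (use Wle_mvar[of p "2*_+1"] in \<open>simp add: wY_def\<close>)
  have sm: "Wle p (p^k) (\<Sum>i<k. of_nat (p^i) * (S p i) ^ (p^(k-i)))"
  proof (rule Wle_sum)
    fix i assume i: "i \<in> {..<k}"
    have "Wle p (p^(k-i) * p^i) (S p i ^ p^(k-i))" by (rule Wle_power[OF less]) (use i in simp)
    moreover have "p^(k-i) * p^i = p^k" using i by (simp add: power_add[symmetric])
    ultimately show "Wle p (p^k) (of_nat (p^i) * S p i ^ p^(k-i))" by (intro Wle_cmult) simp
  qed
  show ?case
    by (subst S_rec) (intro Wle_cdiv Wle_diff Wle_add gX gY sm[unfolded ghost_poly_eq] , simp_all add: ghost_poly_eq gX gY)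
qed

section \<open>Valuations\<close>

context
  fixes v :: "'a::field \<Rightarrow> int"
  assumes dvf: "normalized_dvf v"
begin

lemma v_mult: "x \<noteq> 0 \<Longrightarrow> y \<noteq> 0 \<Longrightarrow> v (x * y) = v x + v y"
  using dvf by (simp add: normalized_dvf_def)

lemma v_add: "x \<noteq> 0 \<Longrightarrow> y \<noteq> 0 \<Longrightarrow> x + y \<noteq> 0 \<Longrightarrow> v (x + y) \<ge> min (v x) (v y)"
  using dvf by (simp add: normalized_dvf_def)

lemma v_one: "v 1 = 0"
  using v_mult[of 1 1] by simp

lemma v_minus_one: "v (-1) = 0"
  using v_mult[of "-1" "-1"] by (simp add: v_one)

lemma v_uminus: "v (- x) = v x"
proof (cases "x = 0")
  case False then show ?thesis using v_mult[of "-1" x] by (simp add: v_minus_one)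
qed simp

lemma v_power: "x \<noteq> 0 \<Longrightarrow> v (x ^ e) = int e * v x"
  by (induction e) (simp_all add: v_one v_mult algebra_simps)

lemma v_of_nat: "of_nat k \<noteq> (0::'a) \<Longrightarrow> v (of_nat k) \<ge> 0"
proof (induction k)
  case 0 then show ?case by simp
next
  case (Suc k)
  show ?case
  proof (cases "of_nat k = (0::'a)")
    case True then show ?thesis by (simp add: v_one)
  next
    case False
    have "v (of_nat k + 1) \<ge> min (v (of_nat k)) (v 1)"
      using Suc.prems False by (intro v_add) (simp_all add: add.commute)
    then show ?thesis using Suc.IH False by (simp add: v_one add.commute)
  qed
qed

lemma v_of_int: "of_int c \<noteq> (0::'a) \<Longrightarrow> v (of_int c) \<ge> 0"
  by (cases c) (auto simp: v_uminus v_of_nat simp del: of_nat_Suc)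

lemma v_sum_bound:
  assumes Z: "Z > 0"
    and "\<And>i. i \<in> I \<Longrightarrow> t i \<noteq> 0 \<Longrightarrow> B \<le> Z * v (t i)"
  shows "sum t I \<noteq> 0 \<Longrightarrow> B \<le> Z * v (sum t I)"
  using assms(2)
proof (induction I rule: infinite_finite_induct)
  case (insert x F)
  show ?case
  proof (cases "t x = 0")
    case True then show ?thesis using insert by simp
  next
    case tx: False
    show ?thesis
    proof (cases "sum t F = 0")
      case True then show ?thesis using insert tx by simp
    next
      case False
      have "v (t x + sum t F) \<ge> min (v (t x)) (v (sum t F))"
        using insert.prems(1) insert.hyps tx False by (intro v_add) auto
      moreover have "B \<le> Z * v (t x)" using insert.prems tx by auto
      moreover have "B \<le> Z * v (sum t F)" using insert False by auto
      ultimately have "B \<le> Z * v (t x + sum t F)"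
        using Z by (smt (verit) mult_left_mono)
      then show ?thesis using insert.hyps by simp
    qed
  qed
qed simp_all

lemma v_prod_nonzero: "finite I \<Longrightarrow> (\<And>i. i \<in> I \<Longrightarrow> t i \<noteq> 0) \<Longrightarrow> v (prod t I) = (\<Sum>i\<in>I. v (t i))"
  by (induction I rule: finite_induct) (simp_all add: v_one v_mult)

lemma v_eval_bound:
  assumes Z: "Z > 0" and M: "M \<ge> 0"
    and hx: "\<And>u. x u \<noteq> 0 \<Longrightarrow> - M * int (p ^ (u div 2)) \<le> Z * v (x u)"
    and W: "Wle p W f"
    and nz: "mpoly_eval x f \<noteq> 0"
  shows "- M * int W \<le> Z * v (mpoly_eval x f)"
proof -
  have "- M * int W \<le> Z * v (of_int (Poly_Mapping.lookup f mn) * mono x mn)"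
    if mn: "mn \<in> Poly_Mapping.keys f" and nz: "of_int (Poly_Mapping.lookup f mn) * mono x mn \<noteq> 0" for mn
  proof -
    have c: "of_int (Poly_Mapping.lookup f mn) \<noteq> (0::'a)" and m: "mono x mn \<noteq> 0" using nz by auto
    have xs: "x u \<noteq> 0" if "u \<in> Poly_Mapping.keys mn" for u
      using m that by (auto simp: mono_def in_keys_iff)
    have vm: "v (mono x mn) = (\<Sum>u\<in>Poly_Mapping.keys mn. int (Poly_Mapping.lookup mn u) * v (x u))"
      unfolding mono_def using xs by (subst v_prod_nonzero) (auto simp: v_power)
    have "Z * v (mono x mn) = (\<Sum>u\<in>Poly_Mapping.keys mn. int (Poly_Mapping.lookup mn u) * (Z * v (x u)))"
      unfolding vm by (simp add: sum_distrib_left algebra_simps)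
    also have "\<dots> \<ge> (\<Sum>u\<in>Poly_Mapping.keys mn. int (Poly_Mapping.lookup mn u) * (- M * int (p ^ (u div 2))))"
      by (intro sum_mono mult_left_mono hx xs) auto
    also have "(\<Sum>u\<in>Poly_Mapping.keys mn. int (Poly_Mapping.lookup mn u) * (- M * int (p ^ (u div 2)))) = - M * int (wt p mn)"
      by (simp add: wt_def sum_distrib_left algebra_simps)
    finally have "- M * int (wt p mn) \<le> Z * v (mono x mn)" .
    moreover have "- M * int W \<le> - M * int (wt p mn)"
      using W mn M by (auto simp: Wle_def intro!: mult_left_mono)
    moreover have "v (of_int (Poly_Mapping.lookup f mn) * mono x mn) \<ge> v (mono x mn)"
      using v_of_int[OF c] c m by (simp add: v_mult)
    ultimately show ?thesis using Z by (smt (verit) mult_left_mono)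
  qed
  then show ?thesis
    using nz unfolding mpoly_eval_def mono_def[symmetric]
    by (intro v_sum_bound[OF Z]) auto
qed

end


lemma wneg_inv_W:
  assumes "Factorial_Ring.prime p" and "a \<in> carrier (WittGroup p n)"
  shows "witt_add p n (trunc n (wneg p a)) a = (\<lambda>_. 0)"
proof
  fix k
  show "witt_add p n (trunc n (wneg p a)) a k = 0"
  proof (cases "k < n")
    case True
    then have "witt_add p n (trunc n (wneg p a)) a k = wadd p (wneg p a) a k"
      using assms(2) by (simp add: witt_add_trunc wadd_trunc1[OF assms(1) True] WittGroup_simps)
    also have "\<dots> = 0" by (simp add: wadd_comm[OF assms(1)] wadd_wneg[OF assms(1)])
    finally show ?thesis .
  qed (simp add: witt_add_def)
qed

lemma W_inv:
  assumes "Factorial_Ring.prime p" and "a \<in> carrier (WittGroup p n)"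
  shows "inv\<^bsub>WittGroup p n\<^esub> a = trunc n (wneg p (a :: nat \<Rightarrow> 'a::comm_ring_1))"
proof -
  interpret comm_group "WittGroup p n :: (nat \<Rightarrow> 'a) monoid" by (rule Witt_comm_group[OF assms(1)])
  show ?thesis
    by (rule inv_equality) (use assms wneg_inv_W[OF assms] in \<open>simp_all add: WittGroup_simps trunc_def\<close>)
qed

locale witt_setting =
  fixes p n :: nat and v :: "'a::field \<Rightarrow> int"
  assumes prime: "Factorial_Ring.prime p" and charp: "of_nat p = (0::'a)"
    and dvf: "normalized_dvf v"
begin

lemma p_pos: "p > 0" using prime_gt_1_nat[OF prime] by simp

abbreviation "W \<equiv> (WittGroup p n :: (nat \<Rightarrow> 'a) monoid)"

sublocale W: comm_group W by (rule Witt_comm_group[OF prime])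

definition Z :: int where "Z = int p ^ (n - 1)"

lemma Z_pos: "Z > 0" using p_pos by (simp add: Z_def)

lemma bound_iff:
  assumes "i < n"
  shows "(- m \<le> int p ^ (n - Suc i) * v x) \<longleftrightarrow> (- (m * int p ^ i) \<le> Z * v x)"
proof -
  have e: "Z = int p ^ (n - Suc i) * int p ^ i" using assms by (simp add: Z_def power_add[symmetric])
  have pi: "int p ^ i > 0" using p_pos by simp
  have "(- m \<le> int p ^ (n - Suc i) * v x) \<longleftrightarrow> (- m * int p ^ i \<le> int p ^ (n - Suc i) * v x * int p ^ i)"
    by (rule mult_le_cancel_right_pos[OF pi, symmetric])
  then show ?thesis by (simp add: e algebra_simps)
qed

lemma fil_iff: "a \<in> fil p v n m \<longleftrightarrow> (\<forall>i\<ge>n. a i = 0) \<and> (\<forall>i<n. a i \<noteq> 0 \<longrightarrow> - m * int (p ^ i) \<le> Z * v (a i))"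
  by (auto simp: fil_def WittGroup_simps bound_iff)

lemma fil_carrier: "fil p v n m \<subseteq> carrier W"
  by (auto simp: fil_def)

lemma fil_mono: "m \<le> m' \<Longrightarrow> fil p v n m \<subseteq> fil p v n m'"
  by (auto simp: fil_def)

lemma bound2:
  assumes "t1 + t2 \<noteq> 0" and "t1 \<noteq> 0 \<Longrightarrow> B \<le> Z * v t1" and "t2 \<noteq> 0 \<Longrightarrow> B \<le> Z * v t2"
  shows "B \<le> Z * v (t1 + t2)"
proof (cases "t1 = 0 \<or> t2 = 0")
  case True then show ?thesis using assms by auto
next
  case False
  have "v (t1 + t2) \<ge> min (v t1) (v t2)" using False assms(1) by (intro v_add[OF dvf]) auto
  then show ?thesis using assms False Z_pos by (smt (verit) mult_left_mono)
qed

lemma eval_S_bound: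
  assumes m: "m \<ge> 0" and k: "k < n"
    and hx: "\<And>u. x u \<noteq> 0 \<Longrightarrow> - m * int (p ^ (u div 2)) \<le> Z * v (x u)"
    and nz: "mpoly_eval x (S p k) \<noteq> 0"
  shows "- m * int (p ^ k) \<le> Z * v (mpoly_eval x (S p k))"
  by (rule v_eval_bound[OF dvf Z_pos m hx Wle_S nz])

lemma fil_add:
  assumes m: "m \<ge> 0" and a: "a \<in> fil p v n m" and b: "b \<in> fil p v n m"
  shows "witt_add p n a b \<in> fil p v n m"
  unfolding fil_iff
proof (intro conjI allI impI)
  fix i assume "i \<ge> n" then show "witt_add p n a b i = 0" by (simp add: witt_add_def)
next
  fix i assume i: "i < n" and nz: "witt_add p n a b i \<noteq> 0"
  let ?x = "\<lambda>u. if even u then a (u div 2) else b (u div 2)"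
  have hx: "- m * int (p ^ (u div 2)) \<le> Z * v (?x u)" if "?x u \<noteq> 0" for u
    using a b that unfolding fil_iff by (cases "u div 2 < n"; cases "even u") auto
  show "- m * int (p ^ i) \<le> Z * v (witt_add p n a b i)"
    using eval_S_bound[OF m i hx] nz i by (simp add: witt_add_def)
qed

lemma fil_zero: "(\<lambda>_. 0) \<in> fil p v n m"
  by (simp add: fil_iff)

lemma fil_wneg:
  assumes m: "m \<ge> 0" and a: "a \<in> fil p v n m"
  shows "trunc n (wneg p a) \<in> fil p v n m"
proof -
  have main: "k < n \<Longrightarrow> wneg p a k \<noteq> 0 \<Longrightarrow> - m * int (p ^ k) \<le> Z * v (wneg p a k)" for k
  proof (induction k rule: less_induct)
    case (less k)
    let ?x = "\<lambda>u. if even u then trunc k a (u div 2) else trunc k (wneg p a) (u div 2)"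
    have hx: "- m * int (p ^ (u div 2)) \<le> Z * v (?x u)" if "?x u \<noteq> 0" for u
    proof (cases "even u")
      case True then show ?thesis using that a less.prems(1) unfolding fil_iff by (auto simp: trunc_def split: if_splits)
    next
      case False then show ?thesis using that less by (auto simp: trunc_def split: if_splits)
    qed
    have E: "wadd p (trunc k a) (trunc k (wneg p a)) k \<noteq> 0 \<Longrightarrow> - m * int (p ^ k) \<le> Z * v (wadd p (trunc k a) (trunc k (wneg p a)) k)"
      unfolding wadd_def by (rule eval_S_bound[OF m less.prems(1) hx])
    have A: "- a k \<noteq> 0 \<Longrightarrow> - m * int (p ^ k) \<le> Z * v (- a k)"
      using a less.prems(1) unfolding fil_iff by (simp add: v_uminus[OF dvf])
    have "wneg p a k = - a k + - wadd p (trunc k a) (trunc k (wneg p a)) k"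
      by (subst wneg_rec) simp
    then show ?case using less.prems(2) bound2[of "- a k" "- wadd p (trunc k a) (trunc k (wneg p a)) k"] A E
      by (simp add: v_uminus[OF dvf])
  qed
  show ?thesis unfolding fil_iff using main by (auto simp: trunc_def)
qed

lemma fil_subgroup:
  assumes m: "m \<ge> 0"
  shows "subgroup (fil p v n m) W"
proof (rule subgroup.intro)
  show "fil p v n m \<subseteq> carrier W" by (rule fil_carrier)
  show "\<And>x y. x \<in> fil p v n m \<Longrightarrow> y \<in> fil p v n m \<Longrightarrow> x \<otimes>\<^bsub>W\<^esub> y \<in> fil p v n m"
    using fil_add[OF m] by (simp add: WittGroup_simps)
  show "\<one>\<^bsub>W\<^esub> \<in> fil p v n m" by (simp add: WittGroup_simps fil_zero)
  fix x assume x: "x \<in> fil p v n m"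
  then have "x \<in> carrier W" using fil_carrier by blast
  then have "inv\<^bsub>W\<^esub> x = trunc n (wneg p x)" by (rule W_inv[OF prime])
  then show "inv\<^bsub>W\<^esub> x \<in> fil p v n m" using fil_wneg[OF m x] by simp
qed

lemma frob_carrier: "a \<in> carrier W \<Longrightarrow> witt_frob p a \<in> carrier W"
  using p_pos by (simp add: WittGroup_simps witt_frob_def power_0_left)

lemma frob_hom: "witt_frob p \<in> hom W W"
proof (rule homI)
  show "\<And>x. x \<in> carrier W \<Longrightarrow> witt_frob p x \<in> carrier W" by (rule frob_carrier)
  fix x y :: "nat \<Rightarrow> 'a"
  show "witt_frob p (x \<otimes>\<^bsub>W\<^esub> y) = witt_frob p x \<otimes>\<^bsub>W\<^esub> witt_frob p y"
  proof
    fix k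
    show "witt_frob p (x \<otimes>\<^bsub>W\<^esub> y) k = (witt_frob p x \<otimes>\<^bsub>W\<^esub> witt_frob p y) k"
    proof (cases "k < n")
      case True
      have "wadd p x y k ^ p = wadd p (witt_frob p x) (witt_frob p y) k"
        unfolding witt_frob_def by (rule wadd_frob[OF prime charp])
      then show ?thesis using True by (simp add: WittGroup_simps witt_add_trunc witt_frob_def)
    next
      case False
      then show ?thesis using p_pos by (simp add: WittGroup_simps witt_add_trunc witt_frob_def power_0_left)
    qed
  qed
qed

lemma frob_fil:
  assumes a: "a \<in> fil p v n (int m div int p)"
  shows "witt_frob p a \<in> fil p v n (int m)"
  unfolding fil_def
proof (intro CollectI conjI allI impI)
  show "witt_frob p a \<in> carrier W" using a fil_carrier frob_carrier by blast
  fix i assume i: "i < n" and nz: "witt_frob p a i \<noteq> 0"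
  then have nz': "a i \<noteq> 0" using p_pos by (auto simp: witt_frob_def power_0_left)
  have h: "- (int m div int p) \<le> int p ^ (n - 1 - i) * v (a i)"
    using a i nz' by (auto simp: fil_def)
  have "int p * (int m div int p) \<le> int m"
  proof -
    have e: "int m = int p * (int m div int p) + int m mod int p" by simp
    have "int m mod int p \<ge> 0" using p_pos by simp
    with e show ?thesis by linarith
  qed
  moreover have "int p * (- (int m div int p)) \<le> int p * (int p ^ (n - 1 - i) * v (a i))"
    using h p_pos by (intro mult_left_mono) auto
  ultimately show "- int m \<le> int p ^ (n - 1 - i) * v (witt_frob p a i)"
    using nz' by (simp add: witt_frob_def v_power[OF dvf] algebra_simps)
qed

lemma frob_fil_back:
  assumes a: "a \<in> carrier W" and fa: "witt_frob p a \<in> fil p v n (int m)"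
  shows "a \<in> fil p v n (int m div int p)"
  unfolding fil_def
proof (intro CollectI conjI allI impI)
  show "a \<in> carrier W" by (rule a)
  fix i assume i: "i < n" and nz: "a i \<noteq> 0"
  then have "witt_frob p a i \<noteq> 0" by (simp add: witt_frob_def)
  then have h: "- int m \<le> int p ^ (n - 1 - i) * v (a i ^ p)"
    using fa i by (auto simp: fil_def witt_frob_def)
  define t where "t = int p ^ (n - 1 - i) * v (a i)"
  have h2: "- int m \<le> int p * t" using h nz by (simp add: v_power[OF dvf] t_def algebra_simps)
  have pp: "int p > 0" using p_pos by simp
  have e: "int m = int p * (int m div int p) + int m mod int p" by simp
  have r: "int m mod int p < int p" using pp by simp
  have "int m < int p * (int m div int p) + int p" using e r by linarith
  then have lt: "int m < int p * (int m div int p + 1)" by (simp add: distrib_left)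
  have "\<not> t \<le> - (int m div int p) - 1"
  proof
    assume "t \<le> - (int m div int p) - 1"
    then have "int p * t \<le> int p * (- (int m div int p) - 1)" using pp by (intro mult_left_mono) auto
    also have "\<dots> = - (int p * (int m div int p + 1))" by (simp add: algebra_simps)
    finally show False using h2 lt by linarith
  qed
  then show "- (int m div int p) \<le> int p ^ (n - 1 - i) * v (a i)"
    unfolding t_def by simp
qed

lemma frob_zero: "a \<in> carrier W \<Longrightarrow> witt_frob p a = \<one>\<^bsub>W\<^esub> \<Longrightarrow> a = \<one>\<^bsub>W\<^esub>"
  by (auto simp: WittGroup_simps witt_frob_def fun_eq_iff)

end


definition gdsum :: "('a, 'b) monoid_scheme \<Rightarrow> 'a set \<Rightarrow> (nat \<Rightarrow> 'a) monoid" where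
  "gdsum G A = sum_group UNIV (\<lambda>j. G\<lparr>carrier := A\<rparr>)"

definition gfsum :: "('a, 'b) monoid_scheme \<Rightarrow> ('a \<Rightarrow> 'a) \<Rightarrow> (nat \<Rightarrow> 'a) \<Rightarrow> 'a" where
  "gfsum G F x = finprod G (\<lambda>j. (F ^^ j) (x j)) {j. x j \<noteq> \<one>\<^bsub>G\<^esub>}"

definition ghmap :: "('a, 'b) monoid_scheme \<Rightarrow> ('a \<Rightarrow> 'a) \<Rightarrow> (nat \<Rightarrow> 'a) \<Rightarrow> nat \<Rightarrow> 'a" where
  "ghmap G F x = (\<lambda>j. if j = 0 then F (x 0) else F (x j) \<otimes>\<^bsub>G\<^esub> inv\<^bsub>G\<^esub> (x (j - 1)))"

definition gfilF :: "('a, 'b) monoid_scheme \<Rightarrow> ('a \<Rightarrow> 'a) \<Rightarrow> 'a set \<Rightarrow> 'a set" where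
  "gfilF G F A = generate G (\<Union>j. (F ^^ j) ` A)"

lemma (in group) hom_finprod_gen:
  assumes G': "comm_group G" and h: "h \<in> hom G G" and f: "f \<in> I \<rightarrow> carrier G"
  shows "h (finprod G f I) = finprod G (\<lambda>i. h (f i)) I"
proof -
  interpret C: comm_group G by (rule G')
  interpret hh: group_hom G G h by (unfold_locales) (rule h)
  show ?thesis using f
  proof (induction I rule: infinite_finite_induct)
    case (insert x F)
    have hc: "\<And>a. a \<in> carrier G \<Longrightarrow> h a \<in> carrier G" using h by (auto simp: hom_def)
    have hf: "(\<lambda>i. h (f i)) \<in> F \<rightarrow> carrier G" "h (f x) \<in> carrier G"
      using insert.prems by (auto intro!: hc simp: Pi_iff)
    show ?case using insert hf by (simp add: hh.hom_mult)
  qed simp_all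
qed

locale exseq = comm_group G for G (structure) +
  fixes F :: "'a \<Rightarrow> 'a" and Fs Fm :: "'a set"
  assumes F_hom: "F \<in> hom G G"
    and F_zero: "\<And>a. a \<in> carrier G \<Longrightarrow> F a = \<one> \<Longrightarrow> a = \<one>"
    and Fs_sub: "subgroup Fs G" and Fm_sub: "subgroup Fm G"
    and Fs_Fm: "Fs \<subseteq> Fm" and F_Fs: "\<And>a. a \<in> Fs \<Longrightarrow> F a \<in> Fm"
    and F_back: "\<And>a. a \<in> carrier G \<Longrightarrow> F a \<in> Fm \<Longrightarrow> a \<in> Fs"
begin

lemma F_closed: "a \<in> carrier G \<Longrightarrow> F a \<in> carrier G"
  using F_hom by (auto simp: hom_def)

lemma F_mult: "a \<in> carrier G \<Longrightarrow> b \<in> carrier G \<Longrightarrow> F (a \<otimes> b) = F a \<otimes> F b"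
  using F_hom by (auto simp: hom_def)

lemma Fj_hom: "(F ^^ j) \<in> hom G G"
proof (induction j)
  case 0 then show ?case by (auto simp: hom_def)
next
  case (Suc j)
  have c: "\<And>a. a \<in> carrier G \<Longrightarrow> (F ^^ j) a \<in> carrier G" using Suc by (auto simp: hom_def)
  have m: "\<And>a b. a \<in> carrier G \<Longrightarrow> b \<in> carrier G \<Longrightarrow> (F ^^ j) (a \<otimes> b) = (F ^^ j) a \<otimes> (F ^^ j) b"
    using Suc by (auto simp: hom_def)
  show ?case by (rule homI) (simp_all add: c m F_closed F_mult)
qed

lemma Fj_closed: "a \<in> carrier G \<Longrightarrow> (F ^^ j) a \<in> carrier G"
  using Fj_hom by (auto simp: hom_def)

lemma Fj_one[simp]: "(F ^^ j) \<one> = \<one>"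
proof -
  interpret group_hom G G "F ^^ j" by unfold_locales (rule Fj_hom)
  show ?thesis by simp
qed

lemma Fj_inv: "a \<in> carrier G \<Longrightarrow> (F ^^ j) (inv a) = inv ((F ^^ j) a)"
proof -
  interpret group_hom G G "F ^^ j" by unfold_locales (rule Fj_hom)
  show "a \<in> carrier G \<Longrightarrow> ?thesis" by simp
qed

lemma Fj_mult: "a \<in> carrier G \<Longrightarrow> b \<in> carrier G \<Longrightarrow> (F ^^ j) (a \<otimes> b) = (F ^^ j) a \<otimes> (F ^^ j) b"
  using Fj_hom by (auto simp: hom_def)

lemma F_one[simp]: "F \<one> = \<one>" using Fj_one[of 1] by simp

lemma F_inv: "a \<in> carrier G \<Longrightarrow> F (inv a) = inv (F a)" using Fj_inv[of a 1] by simp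

lemma Fj_finprod: "f \<in> I \<rightarrow> carrier G \<Longrightarrow> (F ^^ j) (finprod G f I) = finprod G (\<lambda>i. (F ^^ j) (f i)) I"
  by (rule hom_finprod_gen[OF comm_group_axioms Fj_hom])

lemma F_finprod: "f \<in> I \<rightarrow> carrier G \<Longrightarrow> F (finprod G f I) = finprod G (\<lambda>i. F (f i)) I"
  using Fj_finprod[of f I 1] by simp

definition fs :: "'a set \<Rightarrow> (nat \<Rightarrow> 'a) \<Rightarrow> bool" where
  "fs A x \<longleftrightarrow> (\<forall>j. x j \<in> A) \<and> finite {j. x j \<noteq> \<one>}"

lemma carrier_gdsum: "subgroup A G \<Longrightarrow> carrier (gdsum G A) = {x. fs A x}"
  unfolding gdsum_def fs_def
  by (subst carrier_sum_group) (auto intro: subgroup.subgroup_is_group is_group)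

lemma mult_gdsum: "x \<otimes>\<^bsub>gdsum G A\<^esub> y = (\<lambda>j. x j \<otimes> y j)"
  by (simp add: gdsum_def restrict_def)

lemma one_gdsum: "\<one>\<^bsub>gdsum G A\<^esub> = (\<lambda>j. \<one>)"
  by (simp add: gdsum_def restrict_def)

lemma group_gdsum: "subgroup A G \<Longrightarrow> group (gdsum G A)"
  unfolding gdsum_def by (rule sum_group) (auto intro: subgroup.subgroup_is_group is_group)

lemma fs_carrier: "subgroup A G \<Longrightarrow> fs A x \<Longrightarrow> x j \<in> carrier G"
  by (auto simp: fs_def dest: subgroup.mem_carrier)

lemma fs_bound: "fs A x \<Longrightarrow> \<exists>N. \<forall>j\<ge>N. x j = \<one>"
proof -
  assume "fs A x"
  then have "finite {j. x j \<noteq> \<one>}" by (simp add: fs_def)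
  then obtain N where "\<forall>j\<in>{j. x j \<noteq> \<one>}. j < N" by (meson finite_nat_set_iff_bounded)
  then show ?thesis by (metis mem_Collect_eq not_le)
qed

lemma fsum_N:
  assumes A: "subgroup A G" and x: "fs A x" and N: "\<forall>j\<ge>N. x j = \<one>"
  shows "gfsum G F x = finprod G (\<lambda>j. (F ^^ j) (x j)) {..<N}"
  unfolding gfsum_def
proof (rule finprod_mono_neutral_cong_left)
  show "{j. x j \<noteq> \<one>} \<subseteq> {..<N}" using N by (auto simp: not_less[symmetric])
  show "\<And>i. i \<in> {..<N} - {j. x j \<noteq> \<one>} \<Longrightarrow> (F ^^ i) (x i) = \<one>" by simp
  show "(\<lambda>j. (F ^^ j) (x j)) \<in> {..<N} \<rightarrow> carrier G" using fs_carrier[OF A x] Fj_closed by auto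
qed auto

lemma finprod_lessThan_Suc:
  "f \<in> {..<Suc N} \<rightarrow> carrier G \<Longrightarrow> finprod G f {..<Suc N} = finprod G f {..<N} \<otimes> f N"
proof -
  assume f: "f \<in> {..<Suc N} \<rightarrow> carrier G"
  have "finprod G f (insert N {..<N}) = f N \<otimes> finprod G f {..<N}"
    using f by (intro finprod_insert) auto
  moreover have "f N \<in> carrier G" "finprod G f {..<N} \<in> carrier G" using f by (auto intro!: finprod_closed simp: Pi_def)
  ultimately show ?thesis by (simp add: lessThan_Suc m_comm)
qed

lemma finprod_lessThan_Suc_shift:
  "f \<in> {..<Suc N} \<rightarrow> carrier G \<Longrightarrow> finprod G f {..<Suc N} = f 0 \<otimes> finprod G (\<lambda>k. f (Suc k)) {..<N}"
proof -
  assume f: "f \<in> {..<Suc N} \<rightarrow> carrier G"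
  have e: "{..<Suc N} = insert 0 (Suc ` {..<N})" by (auto simp: image_iff less_Suc_eq_0_disj)
  have "finprod G f (insert 0 (Suc ` {..<N})) = f 0 \<otimes> finprod G f (Suc ` {..<N})"
    using f by (intro finprod_insert) (auto simp: e)
  also have "finprod G f (Suc ` {..<N}) = finprod G (\<lambda>k. f (Suc k)) {..<N}"
    using f by (intro finprod_reindex) (auto simp: e)
  finally show ?thesis by (simp add: e)
qed

lemma Fs_carrier: "a \<in> Fs \<Longrightarrow> a \<in> carrier G" by (rule subgroup.mem_carrier[OF Fs_sub])
lemma Fm_carrier: "a \<in> Fm \<Longrightarrow> a \<in> carrier G" by (rule subgroup.mem_carrier[OF Fm_sub])

lemma hmap_fs:
  assumes x: "fs Fs x"
  shows "fs Fm (ghmap G F x)"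
proof -
  have xj: "x j \<in> Fs" for j using x by (simp add: fs_def)
  have comp: "ghmap G F x j \<in> Fm" for j
  proof (cases j)
    case 0 then show ?thesis using F_Fs[OF xj] by (simp add: ghmap_def)
  next
    case (Suc i)
    have "x i \<in> Fm" using xj[of i] Fs_Fm by (rule subsetD[rotated])
    then have "inv (x i) \<in> Fm" by (rule subgroup.m_inv_closed[OF Fm_sub])
    then show ?thesis using Suc F_Fs[OF xj] subgroup.m_closed[OF Fm_sub] by (simp add: ghmap_def)
  qed
  have sub: "{j. ghmap G F x j \<noteq> \<one>} \<subseteq> {j. x j \<noteq> \<one>} \<union> Suc ` {j. x j \<noteq> \<one>}"
  proof
    fix j assume j: "j \<in> {j. ghmap G F x j \<noteq> \<one>}"
    show "j \<in> {j. x j \<noteq> \<one>} \<union> Suc ` {j. x j \<noteq> \<one>}"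
    proof (cases j)
      case 0 then show ?thesis using j by (auto simp: ghmap_def)
    next
      case (Suc i)
      show ?thesis
      proof (cases "x j = \<one>")
        case True
        then have "x i \<noteq> \<one>" using j Suc by (auto simp: ghmap_def)
        then have "j \<in> Suc ` {j. x j \<noteq> \<one>}" using Suc by blast
        then show ?thesis by blast
      next
        case False then show ?thesis by blast
      qed
    qed
  qed
  have "finite ({j. x j \<noteq> \<one>} \<union> Suc ` {j. x j \<noteq> \<one>})" using x by (simp add: fs_def)
  then have "finite {j. ghmap G F x j \<noteq> \<one>}" by (rule finite_subset[OF sub])
  then show ?thesis using comp by (simp add: fs_def)
qed

lemma hmap_mult:
  assumes x: "fs Fs x" and y: "fs Fs y"
  shows "ghmap G F (\<lambda>j. x j \<otimes> y j) = (\<lambda>j. ghmap G F x j \<otimes> ghmap G F y j)"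
proof
  fix j
  have xc: "\<And>j. x j \<in> carrier G" by (rule fs_carrier[OF Fs_sub x])
  have yc: "\<And>j. y j \<in> carrier G" by (rule fs_carrier[OF Fs_sub y])
  show "ghmap G F (\<lambda>j. x j \<otimes> y j) j = ghmap G F x j \<otimes> ghmap G F y j"
  proof (cases j)
    case 0 then show ?thesis by (simp add: ghmap_def F_mult xc yc)
  next
    case (Suc i)
    have "F (x j \<otimes> y j) \<otimes> inv (x i \<otimes> y i) = (F (x j) \<otimes> inv (x i)) \<otimes> (F (y j) \<otimes> inv (y i))"
      using xc yc by (simp add: F_mult inv_mult F_closed m_ac)
    then show ?thesis using Suc by (simp add: ghmap_def)
  qed
qed

lemma hmap_hom: "ghmap G F \<in> hom (gdsum G Fs) (gdsum G Fm)"
proof (rule homI)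
  fix x assume "x \<in> carrier (gdsum G Fs)"
  then have "fs Fs x" by (simp add: carrier_gdsum[OF Fs_sub])
  then show "ghmap G F x \<in> carrier (gdsum G Fm)" by (simp add: carrier_gdsum[OF Fm_sub] hmap_fs)
next
  fix x y assume "x \<in> carrier (gdsum G Fs)" "y \<in> carrier (gdsum G Fs)"
  then have "fs Fs x" "fs Fs y" by (simp_all add: carrier_gdsum[OF Fs_sub])
  then show "ghmap G F (x \<otimes>\<^bsub>gdsum G Fs\<^esub> y) = ghmap G F x \<otimes>\<^bsub>gdsum G Fm\<^esub> ghmap G F y"
    unfolding mult_gdsum by (rule hmap_mult)
qed

lemma hmap_inj: "inj_on (ghmap G F) (carrier (gdsum G Fs))"
proof (rule inj_onI)
  fix x y assume x: "x \<in> carrier (gdsum G Fs)" and y: "y \<in> carrier (gdsum G Fs)" and e: "ghmap G F x = ghmap G F y"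
  have fx: "fs Fs x" and fy: "fs Fs y" using x y by (simp_all add: carrier_gdsum[OF Fs_sub])
  have xc: "\<And>j. x j \<in> carrier G" by (rule fs_carrier[OF Fs_sub fx])
  have yc: "\<And>j. y j \<in> carrier G" by (rule fs_carrier[OF Fs_sub fy])
  have Finj: "a \<in> carrier G \<Longrightarrow> b \<in> carrier G \<Longrightarrow> F a = F b \<Longrightarrow> a = b" for a b
  proof -
    assume a: "a \<in> carrier G" and b: "b \<in> carrier G" and ab: "F a = F b"
    have "F (a \<otimes> inv b) = F a \<otimes> F (inv b)" by (rule F_mult[OF a inv_closed[OF b]])
    also have "\<dots> = F b \<otimes> inv (F b)" by (simp only: ab F_inv[OF b])
    also have "\<dots> = \<one>" by (rule r_inv[OF F_closed[OF b]])
    finally have h1: "F (a \<otimes> inv b) = \<one>" .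
    have h2: "a \<otimes> inv b = \<one>" by (rule F_zero[OF m_closed[OF a inv_closed[OF b]] h1])
    have "inv (inv b) = a" by (rule inv_equality[OF h2 inv_closed[OF b] a])
    then show "a = b" using b by simp
  qed
  have "x j = y j" for j
  proof (induction j)
    case 0 show ?case by (rule Finj[OF xc yc]) (use fun_cong[OF e, of 0] in \<open>simp add: ghmap_def\<close>)
  next
    case (Suc j)
    have "F (x (Suc j)) \<otimes> inv (x j) = F (y (Suc j)) \<otimes> inv (y j)"
      using fun_cong[OF e, of "Suc j"] by (simp add: ghmap_def)
    then have "F (x (Suc j)) \<otimes> inv (x j) = F (y (Suc j)) \<otimes> inv (x j)" using Suc.IH by simp
    then have "F (x (Suc j)) = F (y (Suc j))"
      by (rule r_cancel[OF _ F_closed[OF xc[of "Suc j"]] F_closed[OF yc[of "Suc j"]] inv_closed[OF xc[of j]]])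
    then show ?case by (rule Finj[OF xc yc])
  qed
  then show "x = y" by (rule ext)
qed

end


context exseq begin

lemma fs_mult: "subgroup A G \<Longrightarrow> fs A x \<Longrightarrow> fs A y \<Longrightarrow> fs A (\<lambda>j. x j \<otimes> y j)"
proof -
  assume A: "subgroup A G" and x: "fs A x" and y: "fs A y"
  have c: "x j \<otimes> y j \<in> A" for j using x y subgroup.m_closed[OF A] by (simp add: fs_def)
  have "{j. x j \<otimes> y j \<noteq> \<one>} \<subseteq> {j. x j \<noteq> \<one>} \<union> {j. y j \<noteq> \<one>}" by auto
  moreover have "finite ({j. x j \<noteq> \<one>} \<union> {j. y j \<noteq> \<one>})" using x y by (simp add: fs_def)
  ultimately have "finite {j. x j \<otimes> y j \<noteq> \<one>}" by (rule finite_subset)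
  then show ?thesis using c by (simp add: fs_def)
qed

lemma fsum_closed:
  assumes A: "subgroup A G" and x: "fs A x"
  shows "gfsum G F x \<in> carrier G"
proof -
  have "(\<lambda>j. (F ^^ j) (x j)) \<in> {j. x j \<noteq> \<one>} \<rightarrow> carrier G"
    using Fj_closed[OF fs_carrier[OF A x]] by (simp add: Pi_iff)
  then show ?thesis unfolding gfsum_def by (rule finprod_closed)
qed

lemma fsum_mult:
  assumes A: "subgroup A G" and x: "fs A x" and y: "fs A y"
  shows "gfsum G F (\<lambda>j. x j \<otimes> y j) = gfsum G F x \<otimes> gfsum G F y"
proof -
  obtain N1 where N1: "\<forall>j\<ge>N1. x j = \<one>" using fs_bound[OF x] by blast
  obtain N2 where N2: "\<forall>j\<ge>N2. y j = \<one>" using fs_bound[OF y] by blast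
  define N where "N = max N1 N2"
  have bx: "\<forall>j\<ge>N. x j = \<one>" and by': "\<forall>j\<ge>N. y j = \<one>" using N1 N2 by (auto simp: N_def)
  have bxy: "\<forall>j\<ge>N. x j \<otimes> y j = \<one>" using bx by' by simp
  have xc: "\<And>j. x j \<in> carrier G" by (rule fs_carrier[OF A x])
  have yc: "\<And>j. y j \<in> carrier G" by (rule fs_carrier[OF A y])
  have "gfsum G F (\<lambda>j. x j \<otimes> y j) = finprod G (\<lambda>j. (F ^^ j) (x j \<otimes> y j)) {..<N}"
    by (rule fsum_N[OF A fs_mult[OF A x y] bxy])
  also have "\<dots> = finprod G (\<lambda>j. (F ^^ j) (x j) \<otimes> (F ^^ j) (y j)) {..<N}"
    by (intro finprod_cong') (auto simp: Fj_mult[OF xc yc] intro!: m_closed Fj_closed xc yc)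
  also have "\<dots> = finprod G (\<lambda>j. (F ^^ j) (x j)) {..<N} \<otimes> finprod G (\<lambda>j. (F ^^ j) (y j)) {..<N}"
    by (rule finprod_multf) (auto intro!: Fj_closed xc yc)
  also have "\<dots> = gfsum G F x \<otimes> gfsum G F y"
    by (simp only: fsum_N[OF A x bx] fsum_N[OF A y by'])
  finally show ?thesis .
qed

lemma finprod_in_subgroup:
  assumes H: "subgroup H G" and fin: "finite I" and f: "\<And>i. i \<in> I \<Longrightarrow> f i \<in> H"
  shows "finprod G f I \<in> H"
  using fin f
proof (induction I rule: finite_induct)
  case empty then show ?case by (simp add: subgroup.one_closed[OF H])
next
  case (insert a I)
  have fc: "f \<in> I \<rightarrow> carrier G" "f a \<in> carrier G"
    using insert.prems subgroup.mem_carrier[OF H] by auto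
  have "finprod G f (insert a I) = f a \<otimes> finprod G f I"
    by (rule finprod_insert[OF insert.hyps fc])
  moreover have "f a \<in> H" "finprod G f I \<in> H" using insert by auto
  ultimately show ?case using subgroup.m_closed[OF H] by simp
qed

lemma gens_carrier: "subgroup A G \<Longrightarrow> (\<Union>j. (F ^^ j) ` A) \<subseteq> carrier G"
proof -
  assume A: "subgroup A G"
  show ?thesis
  proof
    fix y assume "y \<in> (\<Union>j. (F ^^ j) ` A)"
    then obtain j a where "a \<in> A" "y = (F ^^ j) a" by blast
    then show "y \<in> carrier G" using Fj_closed[OF subgroup.mem_carrier[OF A]] by simp
  qed
qed

lemma filF_subgroup: "subgroup A G \<Longrightarrow> subgroup (gfilF G F A) G"
  unfolding gfilF_def by (rule generate_is_subgroup[OF gens_carrier])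

lemma fsum_in_filF:
  assumes A: "subgroup A G" and x: "fs A x"
  shows "gfsum G F x \<in> gfilF G F A"
  unfolding gfsum_def
proof (rule finprod_in_subgroup[OF filF_subgroup[OF A]])
  show "finite {j. x j \<noteq> \<one>}" using x by (simp add: fs_def)
  fix j assume "j \<in> {j. x j \<noteq> \<one>}"
  have "(F ^^ j) (x j) \<in> (\<Union>j. (F ^^ j) ` A)" using x by (auto simp: fs_def)
  then show "(F ^^ j) (x j) \<in> gfilF G F A" unfolding gfilF_def by (rule generate.incl)
qed

definition delta :: "nat \<Rightarrow> 'a \<Rightarrow> nat \<Rightarrow> 'a" where
  "delta j a = (\<lambda>i. if i = j then a else \<one>)"

lemma fs_delta: "subgroup A G \<Longrightarrow> a \<in> A \<Longrightarrow> fs A (delta j a)"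
  by (simp add: fs_def delta_def subgroup.one_closed)

lemma fsum_delta:
  assumes A: "subgroup A G" and a: "a \<in> A"
  shows "gfsum G F (delta j a) = (F ^^ j) a"
proof -
  have ac: "a \<in> carrier G" by (rule subgroup.mem_carrier[OF A a])
  have b: "\<forall>i\<ge>Suc j. delta j a i = \<one>" by (simp add: delta_def)
  have "gfsum G F (delta j a) = finprod G (\<lambda>i. (F ^^ i) (delta j a i)) {..<Suc j}"
    by (rule fsum_N[OF A fs_delta[OF A a] b])
  also have "\<dots> = finprod G (\<lambda>i. (F ^^ i) (delta j a i)) {..<j} \<otimes> (F ^^ j) a"
    by (subst finprod_lessThan_Suc) (auto simp: delta_def intro!: Fj_closed ac)
  also have "finprod G (\<lambda>i. (F ^^ i) (delta j a i)) {..<j} = \<one>"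
    by (rule finprod_one_eqI) (simp add: delta_def)
  finally show ?thesis using Fj_closed[OF ac] by simp
qed

lemma filF_image:
  assumes A: "subgroup A G"
  shows "gfsum G F ` {x. fs A x} = gfilF G F A"
proof
  show "gfsum G F ` {x. fs A x} \<subseteq> gfilF G F A" using fsum_in_filF[OF A] by blast
next
  show "gfilF G F A \<subseteq> gfsum G F ` {x. fs A x}"
  proof
    fix h assume "h \<in> gfilF G F A"
    then show "h \<in> gfsum G F ` {x. fs A x}" unfolding gfilF_def
    proof (induction h rule: generate.induct)
      case one
      have "fs A (\<lambda>_. \<one>)" by (simp add: fs_def subgroup.one_closed[OF A])
      moreover have "gfsum G F (\<lambda>_. \<one>) = \<one>" by (simp add: gfsum_def)
      ultimately show ?case by (intro image_eqI[where x="\<lambda>_. \<one>"]) simp_all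
    next
      case (incl h)
      then obtain j a where a: "a \<in> A" and h: "h = (F ^^ j) a" by blast
      show ?case by (rule image_eqI[where x="delta j a"]) (simp_all add: h fsum_delta[OF A a] fs_delta[OF A a])
    next
      case (inv h)
      then obtain j a where a: "a \<in> A" and h: "h = (F ^^ j) a" by blast
      have ia: "inv a \<in> A" by (rule subgroup.m_inv_closed[OF A a])
      have "inv h = (F ^^ j) (inv a)" using h Fj_inv[OF subgroup.mem_carrier[OF A a]] by simp
      then show ?case by (intro image_eqI[where x="delta j (inv a)"]) (simp_all add: fsum_delta[OF A ia] fs_delta[OF A ia])
    next
      case (eng h1 h2)
      then obtain x1 x2 where x1: "fs A x1" "h1 = gfsum G F x1" and x2: "fs A x2" "h2 = gfsum G F x2" by blast
      have "h1 \<otimes> h2 = gfsum G F (\<lambda>j. x1 j \<otimes> x2 j)" using fsum_mult[OF A x1(1) x2(1)] x1 x2 by simp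
      moreover have "fs A (\<lambda>j. x1 j \<otimes> x2 j)" by (rule fs_mult[OF A x1(1) x2(1)])
      ultimately show ?case by (intro image_eqI[where x="\<lambda>j. x1 j \<otimes> x2 j"]) simp_all
    qed
  qed
qed

end


context exseq begin

lemma Fj_Suc: "(F ^^ Suc k) a = F ((F ^^ k) a)"
  by simp

lemma Fj_Suc': "(F ^^ Suc k) (F a) = (F ^^ Suc (Suc k)) a"
  by (simp only: funpow_Suc_right comp_def)

lemma fsum_hmap:
  assumes x: "fs Fs x"
  shows "gfsum G F (ghmap G F x) = \<one>"
proof -
  have xc: "\<And>j. x j \<in> carrier G" by (rule fs_carrier[OF Fs_sub x])
  have hx: "fs Fm (ghmap G F x)" by (rule hmap_fs[OF x])
  have hc: "\<And>j. ghmap G F x j \<in> carrier G" by (rule fs_carrier[OF Fm_sub hx])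
  have T: "finprod G (\<lambda>j. (F ^^ j) (ghmap G F x j)) {..<Suc N} = (F ^^ Suc N) (x N)" for N
  proof (induction N)
    case 0
    have "finprod G (\<lambda>j. (F ^^ j) (ghmap G F x j)) {..<Suc 0} = finprod G (\<lambda>j. (F ^^ j) (ghmap G F x j)) {..<0} \<otimes> (F ^^ 0) (ghmap G F x 0)"
      by (rule finprod_lessThan_Suc) (auto intro!: Fj_closed hc)
    also have "\<dots> = F (x 0)" using F_closed[OF xc] by (simp add: ghmap_def)
    finally show ?case by simp
  next
    case (Suc N)
    have "finprod G (\<lambda>j. (F ^^ j) (ghmap G F x j)) {..<Suc (Suc N)} = finprod G (\<lambda>j. (F ^^ j) (ghmap G F x j)) {..<Suc N} \<otimes> (F ^^ Suc N) (ghmap G F x (Suc N))"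
      by (rule finprod_lessThan_Suc) (auto intro!: Fj_closed hc)
    also have "\<dots> = (F ^^ Suc N) (x N) \<otimes> (F ^^ Suc N) (F (x (Suc N)) \<otimes> inv (x N))"
      by (simp only: Suc.IH) (simp add: ghmap_def)
    also have "(F ^^ Suc N) (F (x (Suc N)) \<otimes> inv (x N)) = (F ^^ Suc (Suc N)) (x (Suc N)) \<otimes> inv ((F ^^ Suc N) (x N))"
      by (simp only: Fj_mult[OF F_closed[OF xc] inv_closed[OF xc]] Fj_inv[OF xc] Fj_Suc')
    also have "(F ^^ Suc N) (x N) \<otimes> ((F ^^ Suc (Suc N)) (x (Suc N)) \<otimes> inv ((F ^^ Suc N) (x N))) = (F ^^ Suc (Suc N)) (x (Suc N))"
    proof -
      have a: "(F ^^ Suc N) (x N) \<in> carrier G" by (rule Fj_closed[OF xc])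
      have b: "(F ^^ Suc (Suc N)) (x (Suc N)) \<in> carrier G" by (rule Fj_closed[OF xc])
      show ?thesis by (simp only: m_lcomm[OF a b inv_closed[OF a]] r_inv[OF a] r_one[OF b])
    qed
    finally show ?case .
  qed
  obtain B where B: "\<forall>j\<ge>B. x j = \<one>" using fs_bound[OF x] by blast
  have bh: "\<forall>j\<ge>Suc B. ghmap G F x j = \<one>"
  proof (intro allI impI)
    fix j assume j: "Suc B \<le> j"
    then obtain i where i: "j = Suc i" "i \<ge> B" by (cases j) auto
    then show "ghmap G F x j = \<one>" using B by (simp add: ghmap_def)
  qed
  have "gfsum G F (ghmap G F x) = finprod G (\<lambda>j. (F ^^ j) (ghmap G F x j)) {..<Suc B}"
    by (rule fsum_N[OF Fm_sub hx bh])
  also have "\<dots> = (F ^^ Suc B) (x B)" by (rule T)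
  also have "\<dots> = \<one>" using B by simp
  finally show ?thesis .
qed

lemma kernel_sub:
  assumes y: "fs Fm y" and k: "gfsum G F y = \<one>"
  shows "\<exists>x. fs Fs x \<and> ghmap G F x = y"
proof -
  obtain M where M: "\<forall>j\<ge>M. y j = \<one>" using fs_bound[OF y] by blast
  have yc: "\<And>j. y j \<in> carrier G" by (rule fs_carrier[OF Fm_sub y])
  define Q where "Q j = finprod G (\<lambda>k. (F ^^ k) (y (Suc j + k))) {..<M}" for j
  define R where "R j = finprod G (\<lambda>k. (F ^^ k) (y (j + k))) {..<Suc M}" for j
  have Qc: "Q j \<in> carrier G" for j
    unfolding Q_def by (rule finprod_closed) (auto intro!: Fj_closed yc)
  have R_dec: "R j = y j \<otimes> F (Q j)" for j
  proof -
    have "R j = (F ^^ 0) (y (j + 0)) \<otimes> finprod G (\<lambda>k. (F ^^ Suc k) (y (j + Suc k))) {..<M}"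
      unfolding R_def by (rule finprod_lessThan_Suc_shift) (auto intro!: Fj_closed yc)
    also have "finprod G (\<lambda>k. (F ^^ Suc k) (y (j + Suc k))) {..<M} = F (Q j)"
      unfolding Q_def by (subst F_finprod) (auto intro!: Fj_closed yc)
    finally show ?thesis by simp
  qed
  have Q_R: "Q j = R (Suc j)" for j
  proof -
    have "R (Suc j) = finprod G (\<lambda>k. (F ^^ k) (y (Suc j + k))) {..<M} \<otimes> (F ^^ M) (y (Suc j + M))"
      unfolding R_def by (rule finprod_lessThan_Suc) (auto intro!: Fj_closed yc)
    also have "(F ^^ M) (y (Suc j + M)) = \<one>" using M by simp
    finally show ?thesis unfolding Q_def using Qc[of j, unfolded Q_def] by simp
  qed
  have fsR: "gfsum G F y = R 0"
  proof -
    have "\<forall>j\<ge>Suc M. y j = \<one>" using M by simp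
    then have "gfsum G F y = finprod G (\<lambda>j. (F ^^ j) (y j)) {..<Suc M}" by (rule fsum_N[OF Fm_sub y])
    then show ?thesis by (simp add: R_def)
  qed
  have Qbig: "Q j = \<one>" if j: "j \<ge> M" for j
    unfolding Q_def by (rule finprod_one_eqI) (use M j in simp)
  define x where "x j = inv (Q j)" for j
  have xc: "x j \<in> carrier G" for j unfolding x_def by (rule inv_closed[OF Qc])
  have e0: "y 0 \<otimes> F (Q 0) = \<one>" using R_dec[of 0] fsR k by simp
  have h0: "F (x 0) = y 0"
  proof -
    have "inv (F (Q 0)) = y 0" by (rule inv_equality[OF e0 F_closed[OF Qc] yc])
    then show ?thesis unfolding x_def by (simp only: F_inv[OF Qc])
  qed
  have hS: "F (x (Suc j)) \<otimes> inv (x j) = y (Suc j)" for j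
  proof -
    have q: "Q j = y (Suc j) \<otimes> F (Q (Suc j))" by (simp only: Q_R[of j] R_dec[of "Suc j"])
    have a: "F (Q (Suc j)) \<in> carrier G" by (rule F_closed[OF Qc])
    have "F (x (Suc j)) \<otimes> inv (x j) = inv (F (Q (Suc j))) \<otimes> Q j"
      unfolding x_def by (simp only: F_inv[OF Qc] inv_inv[OF Qc])
    also have "\<dots> = inv (F (Q (Suc j))) \<otimes> (F (Q (Suc j)) \<otimes> y (Suc j))"
      by (simp only: q m_comm[OF yc a])
    also have "\<dots> = y (Suc j)"
      by (simp only: m_assoc[symmetric, OF inv_closed[OF a] a yc] l_inv[OF a] l_one[OF yc])
    finally show ?thesis .
  qed
  have xFs: "x j \<in> Fs" for j
  proof (induction j)
    case 0 show ?case by (rule F_back[OF xc]) (use h0 y in \<open>simp add: fs_def\<close>)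
  next
    case (Suc j)
    have "F (x (Suc j)) = y (Suc j) \<otimes> x j"
    proof -
      have "F (x (Suc j)) = F (x (Suc j)) \<otimes> inv (x j) \<otimes> x j"
        by (simp only: m_assoc[OF F_closed[OF xc] inv_closed[OF xc] xc] l_inv[OF xc] r_one[OF F_closed[OF xc]])
      then show ?thesis by (simp only: hS)
    qed
    moreover have "y (Suc j) \<in> Fm" using y by (simp add: fs_def)
    moreover have "x j \<in> Fm" using Suc.IH Fs_Fm by (rule subsetD[rotated])
    ultimately have "F (x (Suc j)) \<in> Fm" using subgroup.m_closed[OF Fm_sub] by simp
    then show ?case by (rule F_back[OF xc])
  qed
  have "{j. x j \<noteq> \<one>} \<subseteq> {..<M}"
  proof
    fix j assume j: "j \<in> {j. x j \<noteq> \<one>}"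
    show "j \<in> {..<M}"
    proof (rule ccontr)
      assume "j \<notin> {..<M}"
      then have "Q j = \<one>" by (intro Qbig) simp
      then have "x j = \<one>" by (simp add: x_def)
      then show False using j by simp
    qed
  qed
  then have "finite {j. x j \<noteq> \<one>}" by (rule finite_subset) simp
  then have fx: "fs Fs x" using xFs by (simp add: fs_def)
  have "ghmap G F x = y"
  proof
    fix j show "ghmap G F x j = y j"
    proof (cases j)
      case 0 then show ?thesis using h0 by (simp add: ghmap_def)
    next
      case (Suc i) then show ?thesis using hS[of i] by (simp add: ghmap_def)
    qed
  qed
  then show ?thesis using fx by blast
qed

theorem part1:
  "ghmap G F \<in> hom (gdsum G Fs) (gdsum G Fm)
   \<and> inj_on (ghmap G F) (carrier (gdsum G Fs))
   \<and> gfsum G F \<in> hom (gdsum G Fm) (G\<lparr>carrier := gfilF G F Fm\<rparr>)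
   \<and> ghmap G F ` carrier (gdsum G Fs) = kernel (gdsum G Fm) (G\<lparr>carrier := gfilF G F Fm\<rparr>) (gfsum G F)
   \<and> gfsum G F ` carrier (gdsum G Fm) = gfilF G F Fm"
proof (intro conjI)
  show "ghmap G F \<in> hom (gdsum G Fs) (gdsum G Fm)" by (rule hmap_hom)
  show "inj_on (ghmap G F) (carrier (gdsum G Fs))" by (rule hmap_inj)
  show "gfsum G F \<in> hom (gdsum G Fm) (G\<lparr>carrier := gfilF G F Fm\<rparr>)"
  proof (rule homI)
    fix x assume "x \<in> carrier (gdsum G Fm)"
    then have "fs Fm x" by (simp add: carrier_gdsum[OF Fm_sub])
    then show "gfsum G F x \<in> carrier (G\<lparr>carrier := gfilF G F Fm\<rparr>)" using fsum_in_filF[OF Fm_sub] by simp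
  next
    fix x y assume "x \<in> carrier (gdsum G Fm)" "y \<in> carrier (gdsum G Fm)"
    then have "fs Fm x" "fs Fm y" by (simp_all add: carrier_gdsum[OF Fm_sub])
    then show "gfsum G F (x \<otimes>\<^bsub>gdsum G Fm\<^esub> y) = gfsum G F x \<otimes>\<^bsub>G\<lparr>carrier := gfilF G F Fm\<rparr>\<^esub> gfsum G F y"
      by (simp add: mult_gdsum fsum_mult[OF Fm_sub])
  qed
  show "ghmap G F ` carrier (gdsum G Fs) = kernel (gdsum G Fm) (G\<lparr>carrier := gfilF G F Fm\<rparr>) (gfsum G F)"
  proof
    show "ghmap G F ` carrier (gdsum G Fs) \<subseteq> kernel (gdsum G Fm) (G\<lparr>carrier := gfilF G F Fm\<rparr>) (gfsum G F)"
    proof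
      fix z assume "z \<in> ghmap G F ` carrier (gdsum G Fs)"
      then obtain x where x: "fs Fs x" and z: "z = ghmap G F x" by (auto simp: carrier_gdsum[OF Fs_sub])
      show "z \<in> kernel (gdsum G Fm) (G\<lparr>carrier := gfilF G F Fm\<rparr>) (gfsum G F)"
        unfolding kernel_def using z hmap_fs[OF x] fsum_hmap[OF x] by (simp add: carrier_gdsum[OF Fm_sub])
    qed
  next
    show "kernel (gdsum G Fm) (G\<lparr>carrier := gfilF G F Fm\<rparr>) (gfsum G F) \<subseteq> ghmap G F ` carrier (gdsum G Fs)"
    proof
      fix y assume "y \<in> kernel (gdsum G Fm) (G\<lparr>carrier := gfilF G F Fm\<rparr>) (gfsum G F)"
      then have y: "fs Fm y" and k: "gfsum G F y = \<one>"
        unfolding kernel_def by (simp_all add: carrier_gdsum[OF Fm_sub])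
      obtain x where "fs Fs x" "ghmap G F x = y" using kernel_sub[OF y k] by blast
      then show "y \<in> ghmap G F ` carrier (gdsum G Fs)"
        by (intro image_eqI[where x=x]) (simp_all add: carrier_gdsum[OF Fs_sub])
    qed
  qed
  show "gfsum G F ` carrier (gdsum G Fm) = gfilF G F Fm"
    using filF_image[OF Fm_sub] by (simp add: carrier_gdsum[OF Fm_sub])
qed

end


lemma (in group) eq_iff_mult_inv_one:
  assumes a: "a \<in> carrier G" and b: "b \<in> carrier G"
  shows "a = b \<longleftrightarrow> a \<otimes> inv b = \<one>"
proof
  assume "a = b" then show "a \<otimes> inv b = \<one>" using b by simp
next
  assume h: "a \<otimes> inv b = \<one>"
  have "inv (inv b) = a" by (rule inv_equality[OF h inv_closed[OF b] a])
  then show "a = b" using b by simp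
qed

lemma factor_iso:
  assumes G1: "group G1" and Q: "group Q" and T: "group T"
    and pih: "\<pi> \<in> hom G1 Q" and pis: "\<pi> ` carrier G1 = carrier Q"
    and phh: "\<Phi> \<in> hom G1 T" and phs: "\<Phi> ` carrier G1 = carrier T"
    and ker: "\<And>g. g \<in> carrier G1 \<Longrightarrow> \<pi> g = \<one>\<^bsub>Q\<^esub> \<longleftrightarrow> \<Phi> g = \<one>\<^bsub>T\<^esub>"
  shows "\<exists>\<psi>. \<psi> \<in> iso Q T \<and> (\<forall>g \<in> carrier G1. \<psi> (\<pi> g) = \<Phi> g)"
proof -
  interpret P: group_hom G1 Q \<pi> by (intro group_hom.intro group_hom_axioms.intro G1 Q pih)
  interpret H: group_hom G1 T \<Phi> by (intro group_hom.intro group_hom_axioms.intro G1 T phh)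
  have key: "\<pi> g = \<pi> g' \<longleftrightarrow> \<Phi> g = \<Phi> g'" if g: "g \<in> carrier G1" and g': "g' \<in> carrier G1" for g g'
  proof -
    have c: "g \<otimes>\<^bsub>G1\<^esub> inv\<^bsub>G1\<^esub> g' \<in> carrier G1" using g g' by simp
    have "\<pi> g = \<pi> g' \<longleftrightarrow> \<pi> g \<otimes>\<^bsub>Q\<^esub> inv\<^bsub>Q\<^esub> \<pi> g' = \<one>\<^bsub>Q\<^esub>"
      by (rule P.H.eq_iff_mult_inv_one) (use g g' in simp_all)
    also have "\<dots> \<longleftrightarrow> \<pi> (g \<otimes>\<^bsub>G1\<^esub> inv\<^bsub>G1\<^esub> g') = \<one>\<^bsub>Q\<^esub>" using g g' by simp
    also have "\<dots> \<longleftrightarrow> \<Phi> (g \<otimes>\<^bsub>G1\<^esub> inv\<^bsub>G1\<^esub> g') = \<one>\<^bsub>T\<^esub>" by (rule ker[OF c])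
    also have "\<dots> \<longleftrightarrow> \<Phi> g \<otimes>\<^bsub>T\<^esub> inv\<^bsub>T\<^esub> \<Phi> g' = \<one>\<^bsub>T\<^esub>" using g g' by simp
    also have "\<dots> \<longleftrightarrow> \<Phi> g = \<Phi> g'"
      by (rule H.H.eq_iff_mult_inv_one[symmetric]) (use g g' in simp_all)
    finally show ?thesis .
  qed
  define \<psi> where "\<psi> q = \<Phi> (SOME g. g \<in> carrier G1 \<and> \<pi> g = q)" for q
  have \<psi>\<pi>: "\<psi> (\<pi> g) = \<Phi> g" if g: "g \<in> carrier G1" for g
  proof -
    have ex: "\<exists>g'. g' \<in> carrier G1 \<and> \<pi> g' = \<pi> g" using g by blast
    define g' where "g' = (SOME g'. g' \<in> carrier G1 \<and> \<pi> g' = \<pi> g)"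
    have "g' \<in> carrier G1 \<and> \<pi> g' = \<pi> g" unfolding g'_def by (rule someI_ex[OF ex])
    then show ?thesis using key[OF _ g, of g'] by (simp add: \<psi>_def g'_def[symmetric])
  qed
  have preQ: "\<exists>g \<in> carrier G1. q = \<pi> g" if "q \<in> carrier Q" for q using that pis by blast
  have hom: "\<psi> \<in> hom Q T"
  proof (rule homI)
    fix q assume "q \<in> carrier Q"
    then obtain g where g: "g \<in> carrier G1" "q = \<pi> g" using preQ by blast
    then show "\<psi> q \<in> carrier T" using \<psi>\<pi> by simp
  next
    fix q1 q2 assume "q1 \<in> carrier Q" "q2 \<in> carrier Q"
    then obtain g1 g2 where g: "g1 \<in> carrier G1" "q1 = \<pi> g1" "g2 \<in> carrier G1" "q2 = \<pi> g2" using preQ by meson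
    have "\<psi> (q1 \<otimes>\<^bsub>Q\<^esub> q2) = \<psi> (\<pi> (g1 \<otimes>\<^bsub>G1\<^esub> g2))" using g by simp
    also have "\<dots> = \<Phi> (g1 \<otimes>\<^bsub>G1\<^esub> g2)" using g by (intro \<psi>\<pi>) simp
    also have "\<dots> = \<Phi> g1 \<otimes>\<^bsub>T\<^esub> \<Phi> g2" using g by simp
    finally show "\<psi> (q1 \<otimes>\<^bsub>Q\<^esub> q2) = \<psi> q1 \<otimes>\<^bsub>T\<^esub> \<psi> q2" using g \<psi>\<pi> by simp
  qed
  have bij: "bij_betw \<psi> (carrier Q) (carrier T)"
  proof (rule bij_betw_imageI)
    show "inj_on \<psi> (carrier Q)"
    proof (rule inj_onI)
      fix q1 q2 assume "q1 \<in> carrier Q" "q2 \<in> carrier Q" and e: "\<psi> q1 = \<psi> q2"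
      then obtain g1 g2 where g: "g1 \<in> carrier G1" "q1 = \<pi> g1" "g2 \<in> carrier G1" "q2 = \<pi> g2" using preQ by meson
      then have "\<Phi> g1 = \<Phi> g2" using e \<psi>\<pi> by simp
      then show "q1 = q2" using key[OF g(1) g(3)] g by simp
    qed
    show "\<psi> ` carrier Q = carrier T"
    proof
      show "\<psi> ` carrier Q \<subseteq> carrier T" using hom by (auto simp: hom_def)
      show "carrier T \<subseteq> \<psi> ` carrier Q"
      proof
        fix t assume "t \<in> carrier T"
        then obtain g where g: "g \<in> carrier G1" "t = \<Phi> g" using phs by blast
        then show "t \<in> \<psi> ` carrier Q" using \<psi>\<pi>[OF g(1)] by (intro image_eqI[where x="\<pi> g"]) simp_all
      qed
    qed
  qed
  show ?thesis using hom bij \<psi>\<pi> by (auto simp: iso_def)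
qed


lemma r_coset_restrict: "r_coset (G\<lparr>carrier := A\<rparr>) = r_coset G"
  by (simp add: r_coset_def fun_eq_iff)

lemma set_mult_restrict: "set_mult (G\<lparr>carrier := A\<rparr>) = set_mult G"
  by (simp add: set_mult_def fun_eq_iff)

context exseq begin

definition Hs :: "'a set" where "Hs = Fs <#> (F ` Fs)"

lemma FFs_sub: "subgroup (F ` Fs) G"
proof -
  interpret group_hom G G F by (intro group_hom.intro group_hom_axioms.intro is_group F_hom)
  show ?thesis by (rule subgroup_img_is_subgroup[OF Fs_sub])
qed

lemma Hs_sub: "subgroup Hs G"
  unfolding Hs_def by (rule mult_subgroups[OF Fs_sub FFs_sub])

lemma Hs_mem: "a \<in> Hs \<longleftrightarrow> (\<exists>s\<in>Fs. \<exists>t\<in>Fs. a = s \<otimes> F t)"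
  unfolding Hs_def set_mult_def by blast

lemma Hs_Fm: "Hs \<subseteq> Fm"
proof
  fix a assume "a \<in> Hs"
  then obtain s t where st: "s \<in> Fs" "t \<in> Fs" "a = s \<otimes> F t" using Hs_mem by blast
  have "s \<in> Fm" using st(1) Fs_Fm by (rule subsetD[rotated])
  then show "a \<in> Fm" using st F_Fs[OF st(2)] subgroup.m_closed[OF Fm_sub] by simp
qed

lemma comm_restrict: "subgroup A G \<Longrightarrow> comm_group (G\<lparr>carrier := A\<rparr>)"
proof -
  assume A: "subgroup A G"
  interpret R: group "G\<lparr>carrier := A\<rparr>" by (rule subgroup.subgroup_is_group[OF A is_group])
  show ?thesis
  proof (rule R.group_comm_groupI)
    fix x y assume "x \<in> carrier (G\<lparr>carrier := A\<rparr>)" "y \<in> carrier (G\<lparr>carrier := A\<rparr>)"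
    then have "x \<in> carrier G" "y \<in> carrier G" using subgroup.mem_carrier[OF A] by auto
    then show "x \<otimes>\<^bsub>G\<lparr>carrier := A\<rparr>\<^esub> y = y \<otimes>\<^bsub>G\<lparr>carrier := A\<rparr>\<^esub> x" by (simp add: m_comm)
  qed
qed

lemma normal_restrict: "subgroup A G \<Longrightarrow> subgroup N G \<Longrightarrow> N \<subseteq> A \<Longrightarrow> normal N (G\<lparr>carrier := A\<rparr>)"
proof -
  assume A: "subgroup A G" and N: "subgroup N G" and NA: "N \<subseteq> A"
  interpret R: comm_group "G\<lparr>carrier := A\<rparr>" by (rule comm_restrict[OF A])
  have "subgroup N (G\<lparr>carrier := A\<rparr>)" by (rule subgroup_incl[OF N A NA])
  then show ?thesis by (simp add: R.normal_iff_subgroup)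
qed

lemma normal_G: "subgroup N G \<Longrightarrow> normal N G"
  by (simp add: normal_iff_subgroup)

lemma coset_eq_iff:
  assumes H: "subgroup H G" and a: "a \<in> carrier G"
  shows "H #> a = H \<longleftrightarrow> a \<in> H"
proof
  assume "H #> a = H"
  then show "a \<in> H" using rcos_self[OF a H] by simp
next
  assume "a \<in> H" then show "H #> a = H" by (rule subgroup.rcos_const[OF H is_group])
qed

abbreviation "Gm \<equiv> G\<lparr>carrier := Fm\<rparr>"
abbreviation "QQ \<equiv> sum_group UNIV (\<lambda>i::nat. Gm Mod Hs)"
abbreviation "KK \<equiv> gfilF G F Fs"
abbreviation "T0 \<equiv> G\<lparr>carrier := gfilF G F Fm\<rparr>"

lemma Hs_normal_Gm: "normal Hs Gm"
  by (rule normal_restrict[OF Fm_sub Hs_sub Hs_Fm])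

lemma group_Mod_Hs: "group (Gm Mod Hs)"
  by (rule normal.factorgroup_is_group[OF Hs_normal_Gm])

lemma group_QQ: "group QQ"
  by (rule sum_group) (rule group_Mod_Hs)

lemma carrier_Mod_Hs: "carrier (Gm Mod Hs) = (\<lambda>a. Hs #> a) ` Fm"
  by (simp add: carrier_FactGroup r_coset_restrict)

lemma carrier_QQ: "carrier QQ = {\<xi>. (\<forall>i. \<xi> i \<in> (\<lambda>a. Hs #> a) ` Fm) \<and> finite {i. \<xi> i \<noteq> Hs}}"
  by (subst carrier_sum_group) (auto simp: group_Mod_Hs carrier_Mod_Hs)

lemma Hs_carrier: "Hs \<subseteq> carrier G" using subgroup.subset[OF Hs_sub] .

lemma pi_hom: "(\<lambda>x i. Hs #> x i) \<in> hom (gdsum G Fm) QQ"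
proof (rule homI)
  fix x assume "x \<in> carrier (gdsum G Fm)"
  then have x: "fs Fm x" by (simp add: carrier_gdsum[OF Fm_sub])
  have "{i. Hs #> x i \<noteq> Hs} \<subseteq> {i. x i \<noteq> \<one>}"
  proof
    fix i assume "i \<in> {i. Hs #> x i \<noteq> Hs}"
    then show "i \<in> {i. x i \<noteq> \<one>}" using coset_mult_one[OF Hs_carrier] by auto
  qed
  then have "finite {i. Hs #> x i \<noteq> Hs}" using x by (auto simp: fs_def intro: finite_subset)
  moreover have "Hs #> x i \<in> (\<lambda>a. Hs #> a) ` Fm" for i using x by (simp add: fs_def)
  ultimately show "(\<lambda>i. Hs #> x i) \<in> carrier QQ" by (simp add: carrier_QQ)
next
  fix x y assume "x \<in> carrier (gdsum G Fm)" "y \<in> carrier (gdsum G Fm)"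
  then have x: "fs Fm x" and y: "fs Fm y" by (simp_all add: carrier_gdsum[OF Fm_sub])
  have xc: "\<And>i. x i \<in> carrier G" by (rule fs_carrier[OF Fm_sub x])
  have yc: "\<And>i. y i \<in> carrier G" by (rule fs_carrier[OF Fm_sub y])
  show "(\<lambda>i. Hs #> (x \<otimes>\<^bsub>gdsum G Fm\<^esub> y) i) = (\<lambda>i. Hs #> x i) \<otimes>\<^bsub>QQ\<^esub> (\<lambda>i. Hs #> y i)"
    by (simp add: mult_gdsum set_mult_restrict restrict_def normal.rcos_sum[OF normal_G[OF Hs_sub] xc yc])
qed

lemma pi_surj: "(\<lambda>x i. Hs #> x i) ` carrier (gdsum G Fm) = carrier QQ"
proof
  show "(\<lambda>x i. Hs #> x i) ` carrier (gdsum G Fm) \<subseteq> carrier QQ"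
    using pi_hom by (auto simp: hom_def)
next
  show "carrier QQ \<subseteq> (\<lambda>x i. Hs #> x i) ` carrier (gdsum G Fm)"
  proof
    fix \<xi> assume "\<xi> \<in> carrier QQ"
    then have \<xi>: "\<And>i. \<xi> i \<in> (\<lambda>a. Hs #> a) ` Fm" and fin: "finite {i. \<xi> i \<noteq> Hs}" by (auto simp: carrier_QQ)
    define r where "r i = (if \<xi> i = Hs then \<one> else (SOME a. a \<in> Fm \<and> \<xi> i = Hs #> a))" for i
    have r: "r i \<in> Fm \<and> \<xi> i = Hs #> r i" for i
    proof (cases "\<xi> i = Hs")
      case True then show ?thesis
        by (simp add: r_def subgroup.one_closed[OF Fm_sub] coset_mult_one[OF Hs_carrier])
    next
      case False
      have ex: "\<exists>a. a \<in> Fm \<and> \<xi> i = Hs #> a" using \<xi>[of i] by blast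
      from someI_ex[OF ex] show ?thesis using False by (simp add: r_def)
    qed
    have "{i. r i \<noteq> \<one>} \<subseteq> {i. \<xi> i \<noteq> Hs}" by (auto simp: r_def)
    then have "finite {i. r i \<noteq> \<one>}" using fin by (rule finite_subset)
    then have "fs Fm r" using r by (simp add: fs_def)
    moreover have "\<xi> = (\<lambda>i. Hs #> r i)" using r by auto
    ultimately show "\<xi> \<in> (\<lambda>x i. Hs #> x i) ` carrier (gdsum G Fm)"
      by (intro image_eqI[where x=r]) (simp_all add: carrier_gdsum[OF Fm_sub])
  qed
qed

lemma KK_sub: "subgroup KK G" by (rule filF_subgroup[OF Fs_sub])
lemma filFm_sub: "subgroup (gfilF G F Fm) G" by (rule filF_subgroup[OF Fm_sub])

lemma KK_le: "KK \<subseteq> gfilF G F Fm"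
  unfolding gfilF_def
proof (rule mono_generate)
  show "(\<Union>j. (F ^^ j) ` Fs) \<subseteq> (\<Union>j. (F ^^ j) ` Fm)" using Fs_Fm by blast
qed

lemma KK_normal: "normal KK T0"
  by (rule normal_restrict[OF filFm_sub KK_sub KK_le])

lemma group_T: "group (T0 Mod KK)"
  by (rule normal.factorgroup_is_group[OF KK_normal])

lemma KK_carrier: "KK \<subseteq> carrier G" using subgroup.subset[OF KK_sub] .

lemma phi_hom: "(\<lambda>x. KK #> gfsum G F x) \<in> hom (gdsum G Fm) (T0 Mod KK)"
proof (rule homI)
  fix x assume "x \<in> carrier (gdsum G Fm)"
  then have x: "fs Fm x" by (simp add: carrier_gdsum[OF Fm_sub])
  show "KK #> gfsum G F x \<in> carrier (T0 Mod KK)"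
    using fsum_in_filF[OF Fm_sub x] by (simp add: carrier_FactGroup r_coset_restrict)
next
  fix x y assume "x \<in> carrier (gdsum G Fm)" "y \<in> carrier (gdsum G Fm)"
  then have x: "fs Fm x" and y: "fs Fm y" by (simp_all add: carrier_gdsum[OF Fm_sub])
  show "KK #> gfsum G F (x \<otimes>\<^bsub>gdsum G Fm\<^esub> y) = (KK #> gfsum G F x) \<otimes>\<^bsub>T0 Mod KK\<^esub> (KK #> gfsum G F y)"
    by (simp add: mult_gdsum fsum_mult[OF Fm_sub x y] set_mult_restrict
        normal.rcos_sum[OF normal_G[OF KK_sub] fsum_closed[OF Fm_sub x] fsum_closed[OF Fm_sub y]])
qed

lemma phi_surj: "(\<lambda>x. KK #> gfsum G F x) ` carrier (gdsum G Fm) = carrier (T0 Mod KK)"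
proof -
  have "(\<lambda>x. KK #> gfsum G F x) ` carrier (gdsum G Fm) = (\<lambda>z. KK #> z) ` (gfsum G F ` carrier (gdsum G Fm))"
    by (simp add: image_image)
  also have "gfsum G F ` carrier (gdsum G Fm) = gfilF G F Fm"
    using filF_image[OF Fm_sub] by (simp add: carrier_gdsum[OF Fm_sub])
  finally show ?thesis by (simp add: carrier_FactGroup r_coset_restrict)
qed

lemma main_ker:
  assumes x: "fs Fm x"
  shows "(\<forall>i. x i \<in> Hs) \<longleftrightarrow> gfsum G F x \<in> KK"
proof
  assume H: "\<forall>i. x i \<in> Hs"
  have "(F ^^ i) (x i) \<in> KK" for i
  proof -
    obtain s t where st: "s \<in> Fs" "t \<in> Fs" "x i = s \<otimes> F t" using H Hs_mem by blast
    have sc: "s \<in> carrier G" and tc: "t \<in> carrier G" using st Fs_carrier by auto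
    have "(F ^^ i) (x i) = (F ^^ i) s \<otimes> (F ^^ Suc i) t"
      by (simp add: st(3) Fj_mult[OF sc F_closed[OF tc]] funpow_swap1)
    moreover have "(F ^^ i) s \<in> KK" unfolding gfilF_def using st(1) by (intro generate.incl) blast
    moreover have "(F ^^ Suc i) t \<in> KK" unfolding gfilF_def using st(2) by (intro generate.incl) blast
    ultimately show ?thesis using subgroup.m_closed[OF KK_sub] by simp
  qed
  then show "gfsum G F x \<in> KK"
    unfolding gfsum_def using x by (intro finprod_in_subgroup[OF KK_sub]) (simp_all add: fs_def)
next
  assume "gfsum G F x \<in> KK"
  then obtain y where y: "fs Fs y" and e: "gfsum G F x = gfsum G F y"
    using filF_image[OF Fs_sub] by (metis (no_types, lifting) image_iff mem_Collect_eq)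
  have xc: "\<And>i. x i \<in> carrier G" by (rule fs_carrier[OF Fm_sub x])
  have yc: "\<And>i. y i \<in> carrier G" by (rule fs_carrier[OF Fs_sub y])
  have yFm: "fs Fm y" using y Fs_Fm by (auto simp: fs_def)
  define iy where "iy i = inv (y i)" for i
  have iyFm: "fs Fm iy"
  proof -
    have "{i. iy i \<noteq> \<one>} = {i. y i \<noteq> \<one>}" using yc by (auto simp: iy_def)
    moreover have "iy i \<in> Fm" for i using yFm subgroup.m_inv_closed[OF Fm_sub] by (simp add: fs_def iy_def)
    ultimately show ?thesis using yFm by (simp add: fs_def)
  qed
  have "gfsum G F y \<otimes> gfsum G F iy = gfsum G F (\<lambda>i. y i \<otimes> iy i)"
    by (rule fsum_mult[OF Fm_sub yFm iyFm, symmetric])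
  also have "(\<lambda>i. y i \<otimes> iy i) = (\<lambda>i. \<one>)" using yc by (simp add: iy_def)
  also have "gfsum G F (\<lambda>i. \<one>) = \<one>" by (simp add: gfsum_def)
  finally have inv_y: "gfsum G F y \<otimes> gfsum G F iy = \<one>" .
  define z where "z i = x i \<otimes> iy i" for i
  have zFm: "fs Fm z" unfolding z_def by (rule fs_mult[OF Fm_sub x iyFm])
  have "gfsum G F z = gfsum G F x \<otimes> gfsum G F iy" unfolding z_def by (rule fsum_mult[OF Fm_sub x iyFm])
  also have "\<dots> = \<one>" using e inv_y by simp
  finally obtain w where w: "fs Fs w" and hw: "ghmap G F w = z" using kernel_sub[OF zFm] by blast
  have wc: "\<And>i. w i \<in> carrier G" by (rule fs_carrier[OF Fs_sub w])
  have xz: "x i = z i \<otimes> y i" for i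
    using xc yc by (simp add: z_def iy_def m_assoc)
  show "\<forall>i. x i \<in> Hs"
  proof
    fix i
    show "x i \<in> Hs"
    proof (cases i)
      case 0
      have "x i = F (w 0) \<otimes> y 0"
        using xz[of i] fun_cong[OF hw, of 0] 0 by (simp add: ghmap_def)
      then have "x i = y 0 \<otimes> F (w 0)" using m_comm[OF F_closed[OF wc] yc] by simp
      then show ?thesis using y w by (auto simp: Hs_mem fs_def)
    next
      case (Suc j)
      have "x i = (inv (w j) \<otimes> y i) \<otimes> F (w i)"
      proof -
        have "x i = (F (w i) \<otimes> inv (w j)) \<otimes> y i"
          using xz[of i] fun_cong[OF hw, of i] Suc by (simp add: ghmap_def)
        also have "\<dots> = (inv (w j) \<otimes> y i) \<otimes> F (w i)"
          using wc yc F_closed[OF wc] by (simp add: m_ac)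
        finally show ?thesis .
      qed
      moreover have "inv (w j) \<otimes> y i \<in> Fs"
        using w y subgroup.m_closed[OF Fs_sub] subgroup.m_inv_closed[OF Fs_sub] by (simp add: fs_def)
      moreover have "w i \<in> Fs" using w by (simp add: fs_def)
      ultimately show ?thesis by (auto simp: Hs_mem)
    qed
  qed
qed

theorem part2:
  "\<exists>\<psi>. \<psi> \<in> iso QQ (T0 Mod KK) \<and> (\<forall>x \<in> carrier (gdsum G Fm). \<psi> (\<lambda>i. Hs #> x i) = KK #> gfsum G F x)"
proof -
  have ker: "(\<lambda>i. Hs #> x i) = \<one>\<^bsub>QQ\<^esub> \<longleftrightarrow> KK #> gfsum G F x = \<one>\<^bsub>T0 Mod KK\<^esub>"
    if "x \<in> carrier (gdsum G Fm)" for x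
  proof -
    have x: "fs Fm x" using that by (simp add: carrier_gdsum[OF Fm_sub])
    have xc: "\<And>i. x i \<in> carrier G" by (rule fs_carrier[OF Fm_sub x])
    have "(\<lambda>i. Hs #> x i) = \<one>\<^bsub>QQ\<^esub> \<longleftrightarrow> (\<forall>i. Hs #> x i = Hs)"
      by (simp add: fun_eq_iff restrict_def)
    also have "\<dots> \<longleftrightarrow> (\<forall>i. x i \<in> Hs)" using coset_eq_iff[OF Hs_sub xc] by simp
    also have "\<dots> \<longleftrightarrow> gfsum G F x \<in> KK" by (rule main_ker[OF x])
    also have "\<dots> \<longleftrightarrow> KK #> gfsum G F x = KK" using coset_eq_iff[OF KK_sub fsum_closed[OF Fm_sub x]] by simp
    finally show ?thesis by simp
  qed
  show ?thesis
    by (rule factor_iso[OF group_gdsum[OF Fm_sub] group_QQ group_T pi_hom pi_surj phi_hom phi_surj ker])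
qed

end


theorem proposition4p1:
  fixes p n m :: nat and v :: "'a::field \<Rightarrow> int"
  assumes "Factorial_Ring.prime p" and "of_nat p = (0::'a)"
    and "normalized_dvf v"
    and "n \<ge> 1" and "m \<ge> 1"
  defines "W \<equiv> (WittGroup p n :: (nat \<Rightarrow> 'a) monoid)"
    and "Fm \<equiv> fil p v n (int m)"
    and "Fs \<equiv> fil p v n (int (m div p))"
  shows
    "(witt_h p n \<in> hom (witt_dsum p n Fs) (witt_dsum p n Fm)
     \<and> inj_on (witt_h p n) (carrier (witt_dsum p n Fs))
     \<and> frob_sum p n \<in> hom (witt_dsum p n Fm) (W\<lparr>carrier := filF p v n (int m)\<rparr>)
     \<and> witt_h p n ` carrier (witt_dsum p n Fs)
         = kernel (witt_dsum p n Fm) (W\<lparr>carrier := filF p v n (int m)\<rparr>) (frob_sum p n)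
     \<and> frob_sum p n ` carrier (witt_dsum p n Fm) = filF p v n (int m))
   \<and>
    (\<exists>\<psi>. \<psi> \<in> iso (sum_group UNIV (\<lambda>i. (W\<lparr>carrier := Fm\<rparr>) Mod (Fs <#>\<^bsub>W\<^esub> witt_frob p ` Fs)))
                 ((W\<lparr>carrier := filF p v n (int m)\<rparr>) Mod filF p v n (int (m div p)))
       \<and> (\<forall>x \<in> carrier (witt_dsum p n Fm).
            \<psi> (\<lambda>i. (Fs <#>\<^bsub>W\<^esub> witt_frob p ` Fs) #>\<^bsub>W\<^esub> x i)
              = filF p v n (int (m div p)) #>\<^bsub>W\<^esub> frob_sum p n x))"
proof -
  interpret ws: witt_setting p n v using assms(1-3) by unfold_locales
  have Fs_eq: "Fs = fil p v n (int m div int p)" by (simp add: Fs_def zdiv_int)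
  have sub_s: "subgroup Fs W" unfolding W_def Fs_def by (rule ws.fil_subgroup) simp
  have sub_m: "subgroup Fm W" unfolding W_def Fm_def by (rule ws.fil_subgroup) simp
  have c1: "comm_group W" unfolding W_def by (rule ws.W.comm_group_axioms)
  have c2: "witt_frob p \<in> hom W W" unfolding W_def by (rule ws.frob_hom)
  have c3: "\<And>a. a \<in> carrier W \<Longrightarrow> witt_frob p a = \<one>\<^bsub>W\<^esub> \<Longrightarrow> a = \<one>\<^bsub>W\<^esub>"
    unfolding W_def by (rule ws.frob_zero)
  have c4: "Fs \<subseteq> Fm" unfolding Fs_def Fm_def by (rule ws.fil_mono) simp
  have c5: "\<And>a. a \<in> Fs \<Longrightarrow> witt_frob p a \<in> Fm"
    unfolding Fs_eq Fm_def by (rule ws.frob_fil)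
  have c6: "\<And>a. a \<in> carrier W \<Longrightarrow> witt_frob p a \<in> Fm \<Longrightarrow> a \<in> Fs"
    unfolding Fs_eq Fm_def W_def by (rule ws.frob_fil_back)
  interpret E: exseq W "witt_frob p" Fs Fm
    by (rule exseq.intro[OF c1 exseq_axioms.intro[OF c2 c3 sub_s sub_m c4 c5 c6]])
  have e1: "witt_dsum p n = gdsum W" by (simp add: fun_eq_iff witt_dsum_def gdsum_def W_def)
  have e2: "frob_sum p n = gfsum W (witt_frob p)"
    by (simp add: fun_eq_iff frob_sum_def gfsum_def W_def WittGroup_simps)
  have e3: "witt_h p n = ghmap W (witt_frob p)"
    by (simp add: fun_eq_iff witt_h_def ghmap_def W_def)
  have e4: "filF p v n = (\<lambda>m. gfilF W (witt_frob p) (fil p v n m))"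
    by (simp add: fun_eq_iff filF_def gfilF_def W_def)
  have e5: "fil p v n (int m) = Fm" "fil p v n (int (m div p)) = Fs" by (simp_all add: Fm_def Fs_def)
  show ?thesis
    unfolding e1 e2 e3 e4 e5 using E.part1 E.part2 by (simp add: E.Hs_def)
qed


end
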